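(* Assume (A1)–(A4), bandwidths $\boldsymbol h=\boldsymbol h(\alpha,\nu)$ (i.e. $h_{ij}=\alpha n_i^{-\nu}$), and weights $\boldsymbol\omega=\boldsymbol\omega^*(\boldsymbol\tau(\bar\tau^* ),\boldsymbol h(\alpha,\nu))$ or $\boldsymbol\omega=\boldsymbol\omega^*(\boldsymbol\tau(\bar\tau^{**}),\boldsymbol h(\alpha,\nu))$. Then for $x\in[0,1]$: if $11/15\le s\le1$, $\mathrm{AMSE}(\widehat m(x))=O(n^{-4s\nu}+n^{s\nu-1})$; if $2/3<s\le 11/15$, $\mathrm{AMSE}(\widehat m(x))=O(n^{-4s\nu})$. In particular, if $11/15\le s\le1$ and $\nu=\nu^*:=\frac{\ln n}{5(\ln n-\ln m)}$, then $\mathrm{AMSE}(\widehat m(x))=O(n^{-4/5})$ for $x\in[0,1]$.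
   Context: Setting: model $Y=m(X)+\sigma(X)\varepsilon$, $X\in[0,1]$, $\varepsilon$ independent of $X$ with mean 0, variance 1, PDF $f_\varepsilon$, CDF $F_\varepsilon$; data split into $m$ batches of sizes $n_i$, $n=\sum n_i$; global estimator $\widehat m(x)=\sum_{i=1}^m\sum_{j=1}^J\omega_{ij}\widehat m_i(x;\tau_{ij},h_{ij})$, $\widehat m_i(x;\tau,h)$ the local linear quantile estimator from batch $i$ (intercept minimizing $\sum_k\rho_\tau(Y_{ik}-a-b(X_{ik}-x))K_h(X_{ik}-x)$, $\rho_\tau(u)=(\tau-I(u<0))u$, $K_h=K(\cdot/h)/h$). Stacked vectors $\boldsymbol\omega,\boldsymbol\tau,\boldsymbol h\in\mathbb R^{mJ}$, $\mathbf 1_d$ all-ones vector, $\boldsymbol F_\varepsilon^{-1}(\boldsymbol\tau)=(F_\varepsilon^{-1}(\tau_{ij}))$. Notation: $\mu_2=\int v^2K$; $\beta(x,\tau)=\frac{\mu_2}{2}(m''(x)+\sigma''(x)F_\varepsilon^{-1}(\tau))$; $a(x)=\sigma^2(x)\int K^2/f_X(x)$; $\mathcal R(\boldsymbol h_i,\boldsymbol\tau_i)$ the $J\times J$ matrix with entries $\frac{\tau_{ij}\wedge\tau_{ij'}-\tau_{ij}\tau_{ij'}}{\sqrt{h_{ij}h_{ij'}}f_\varepsilon(F_\varepsilon^{-1}(\tau_{ij}))f_\varepsilon(F_\varepsilon^{-1}(\tau_{ij'}))}$; $\mathcal R_1(\boldsymbol\tau_i)=\mathcal R(\mathbf 1_J,\boldsymbol\tau_i)$;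 $\boldsymbol S=\mathrm{diag}(n_i^{-1}\mathcal R(\boldsymbol h_i,\boldsymbol\tau_i))_{i=1}^m$; $\mathrm{AMSE}(\widehat m(x))=B^2+\Sigma$ with $B=\sum_{i,j}\omega_{ij}h_{ij}^2\beta(x,\tau_{ij})$ and $\Sigma=a(x)\boldsymbol\omega^\top\boldsymbol S\boldsymbol\omega$. Optimal weights $\boldsymbol\omega^*(\boldsymbol\tau,\boldsymbol h)=\frac{c_1\boldsymbol d_1-c_2\boldsymbol d_2}{c_1c_3-c_2^2}$, $\boldsymbol d_1=\boldsymbol S^{-1}\mathbf 1_{mJ}$, $\boldsymbol d_2=\boldsymbol S^{-1}\boldsymbol F_\varepsilon^{-1}(\boldsymbol\tau)$, $c_1=\boldsymbol d_2^\top\boldsymbol F_\varepsilon^{-1}(\boldsymbol\tau)$, $c_2=\boldsymbol d_2^\top\mathbf 1_{mJ}$, $c_3=\boldsymbol d_1^\top\mathbf 1_{mJ}$. Quantile levels $\boldsymbol\tau(\bar\tau)$ with entries $\bar\tau+\big(\frac{i+mj-m}{mJ}-\frac12(1+\frac1{mJ})\big)d_\tau$, $(\bar\tau-d_\tau/2,\bar\tau+d_\tau/2)\subset(\delta_\tau,1-\delta_\tau)$; $\bar\tau^*$ solves $\mathbf 1_{mJ}^\top\boldsymbol F_\varepsilon^{-1}(\boldsymbol\tau(\bar\tau^* ))=0$; $\bar\tau^{**}$ solves $\mathbf 1_{mJ}^\top\boldsymbol S^{-1}(\boldsymbol\tau(\bar\tau^{**}),\boldsymbol h(1,\nu))\boldsymbol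 F_\varepsilon^{-1}(\boldsymbol\tau(\bar\tau^{**}))=0$. Assumptions. (A1) On an open $I_x\subseteq[0,1]$: $f_X,\sigma>0$; $f_X'',m'',\sigma''$ exist and continuous; $f_\varepsilon>0$ with $f'_\varepsilon$ continuous, bounded. (A2) $K$ Lipschitz, nonnegative, compactly supported, $\int K=1$, $\int uK=0$, $\int u^2K<\infty$, $\int K^2<\infty$, $K\ge\delta_K>0$ on some $[-s_K,s_K]$. (A3) $\sum\omega_{ij}=1$, $\sum\omega_{ij}F_\varepsilon^{-1}(\tau_{ij})=0$; constants $M_w>0$, $\delta_\tau\in(0,1/2)$, $0<\lambda_{\min}<\lambda_{\max}<\infty$ independent of $n,m$ with $\|\boldsymbol\omega\|_\infty<M_w$, $\delta_\tau<\tau_{ij}<1-\delta_\tau$, eigenvalues of each $\mathcal R_1(\boldsymbol\tau_i)$ in $(\lambda_{\min},\lambda_{\max})$. (A4) Constants $M_b>0$, $s\in(2/3,1]$ with $M_b^{-2}n^s<n_i<M_b^2n^s$; $h_{ij}=\Omega(n^{-s\nu})$ with $0<\nu<3-2/s$; $a_n=\Omega(b_n)$ means $a_n=O(b_n)$ and $b_n=O(a_n)$. *)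

theory Defs
  imports "HOL-Analysis.Analysis" "HOL-Library.Landau_Symbols"
    "Jordan_Normal_Form.Gauss_Jordan_Elimination" "Jordan_Normal_Form.Char_Poly"
begin

definition qinv :: "(real \<Rightarrow> real) \<Rightarrow> real \<Rightarrow> real" where
  "qinv F t = (THE q. F q = t)"

definition C2_on :: "real set \<Rightarrow> (real \<Rightarrow> real) \<Rightarrow> bool" where
  "C2_on I g \<longleftrightarrow> (\<forall>y\<in>I. g differentiable (at y) \<and> deriv g differentiable (at y))
                 \<and> continuous_on I (deriv (deriv g))"

text \<open>Quantile levels tau(taubar): entry (i,j), 1 <= i <= m, 1 <= j <= J.\<close>
definition tau_lev :: "nat \<Rightarrow> nat \<Rightarrow> real \<Rightarrow> real \<Rightarrow> nat \<Rightarrow> nat \<Rightarrow> real" where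
  "tau_lev m J dtau tbar i j =
     tbar + (real (i + m * j - m) / real (m * J) - (1 + 1 / real (m * J)) / 2) * dtau"

definition bw :: "real \<Rightarrow> real \<Rightarrow> (nat \<Rightarrow> nat) \<Rightarrow> nat \<Rightarrow> nat \<Rightarrow> real" where
  "bw alpha nu nb i j = alpha * real (nb i) powr (- nu)"

definition stack :: "nat \<Rightarrow> nat \<Rightarrow> (nat \<Rightarrow> nat \<Rightarrow> real) \<Rightarrow> real Matrix.vec" where
  "stack m J g = Matrix.vec (m * J) (\<lambda>p. g (p div J + 1) (p mod J + 1))"

definition ones :: "nat \<Rightarrow> real Matrix.vec" where
  "ones d = Matrix.vec d (\<lambda>_. 1)"

definition Rent :: "(real \<Rightarrow> real) \<Rightarrow> (real \<Rightarrow> real) \<Rightarrow> real \<Rightarrow> real \<Rightarrow> real \<Rightarrow> real \<Rightarrow> real" where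
  "Rent fe Finv h h' t t' = (min t t' - t * t') / (sqrt (h * h') * fe (Finv t) * fe (Finv t'))"

definition Rmat :: "(real \<Rightarrow> real) \<Rightarrow> (real \<Rightarrow> real) \<Rightarrow> nat \<Rightarrow> (nat \<Rightarrow> nat \<Rightarrow> real)
                    \<Rightarrow> (nat \<Rightarrow> nat \<Rightarrow> real) \<Rightarrow> nat \<Rightarrow> real mat" where
  "Rmat fe Finv J h tau i =
     mat J J (\<lambda>(j, j'). Rent fe Finv (h i (j + 1)) (h i (j' + 1)) (tau i (j + 1)) (tau i (j' + 1)))"

definition R1mat :: "(real \<Rightarrow> real) \<Rightarrow> (real \<Rightarrow> real) \<Rightarrow> nat \<Rightarrow> (nat \<Rightarrow> nat \<Rightarrow> real) \<Rightarrow> nat \<Rightarrow> real mat" where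
  "R1mat fe Finv J tau i = Rmat fe Finv J (\<lambda>_ _. 1) tau i"

text \<open>S = diag(n_i^{-1} R(h_i,tau_i)), i = 1..m, an mJ x mJ block-diagonal matrix.\<close>
definition Smat :: "(real \<Rightarrow> real) \<Rightarrow> (real \<Rightarrow> real) \<Rightarrow> nat \<Rightarrow> nat \<Rightarrow> (nat \<Rightarrow> nat)
                    \<Rightarrow> (nat \<Rightarrow> nat \<Rightarrow> real) \<Rightarrow> (nat \<Rightarrow> nat \<Rightarrow> real) \<Rightarrow> real mat" where
  "Smat fe Finv m J nb h tau =
     mat (m * J) (m * J) (\<lambda>(p, q).
       if p div J = q div J
       then (Rmat fe Finv J h tau (p div J + 1)) $$ (p mod J, q mod J) / real (nb (p div J + 1))
       else 0)"

definition Sinv :: "(real \<Rightarrow> real) \<Rightarrow> (real \<Rightarrow> real) \<Rightarrow> nat \<Rightarrow> nat \<Rightarrow> (nat \<Rightarrow> nat)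
                    \<Rightarrow> (nat \<Rightarrow> nat \<Rightarrow> real) \<Rightarrow> (nat \<Rightarrow> nat \<Rightarrow> real) \<Rightarrow> real mat" where
  "Sinv fe Finv m J nb h tau = the (mat_inverse (Smat fe Finv m J nb h tau))"

definition Fvec :: "(real \<Rightarrow> real) \<Rightarrow> nat \<Rightarrow> nat \<Rightarrow> (nat \<Rightarrow> nat \<Rightarrow> real) \<Rightarrow> real Matrix.vec" where
  "Fvec Finv m J tau = stack m J (\<lambda>i j. Finv (tau i j))"

definition opt_weights :: "(real \<Rightarrow> real) \<Rightarrow> (real \<Rightarrow> real) \<Rightarrow> nat \<Rightarrow> nat \<Rightarrow> (nat \<Rightarrow> nat)
                    \<Rightarrow> (nat \<Rightarrow> nat \<Rightarrow> real) \<Rightarrow> (nat \<Rightarrow> nat \<Rightarrow> real) \<Rightarrow> real Matrix.vec" where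
  "opt_weights fe Finv m J nb h tau =
     (let Si = Sinv fe Finv m J nb h tau;
          F = Fvec Finv m J tau;
          d1 = Si *\<^sub>v ones (m * J);
          d2 = Si *\<^sub>v F;
          c1 = scalar_prod d2 F;
          c2 = scalar_prod d2 (ones (m * J));
          c3 = scalar_prod d1 (ones (m * J))
      in (1 / (c1 * c3 - c2\<^sup>2)) \<cdot>\<^sub>v (c1 \<cdot>\<^sub>v d1 - c2 \<cdot>\<^sub>v d2))"

definition mu2 :: "(real \<Rightarrow> real) \<Rightarrow> real" where
  "mu2 K = (LINT v|lborel. v\<^sup>2 * K v)"

definition beta :: "(real \<Rightarrow> real) \<Rightarrow> (real \<Rightarrow> real) \<Rightarrow> (real \<Rightarrow> real) \<Rightarrow> (real \<Rightarrow> real)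
                    \<Rightarrow> real \<Rightarrow> real \<Rightarrow> real" where
  "beta K mreg sig Finv x t = mu2 K / 2 * (deriv (deriv mreg) x + deriv (deriv sig) x * Finv t)"

definition avar :: "(real \<Rightarrow> real) \<Rightarrow> (real \<Rightarrow> real) \<Rightarrow> (real \<Rightarrow> real) \<Rightarrow> real \<Rightarrow> real" where
  "avar K sig fX x = (sig x)\<^sup>2 * (LINT v|lborel. (K v)\<^sup>2) / fX x"

definition amse :: "(real \<Rightarrow> real) \<Rightarrow> (real \<Rightarrow> real) \<Rightarrow> (real \<Rightarrow> real) \<Rightarrow> (real \<Rightarrow> real)
                    \<Rightarrow> (real \<Rightarrow> real) \<Rightarrow> (real \<Rightarrow> real) \<Rightarrow> real \<Rightarrow> nat \<Rightarrow> nat \<Rightarrow> (nat \<Rightarrow> nat)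
                    \<Rightarrow> (nat \<Rightarrow> nat \<Rightarrow> real) \<Rightarrow> (nat \<Rightarrow> nat \<Rightarrow> real) \<Rightarrow> real Matrix.vec \<Rightarrow> real" where
  "amse K mreg sig fX fe Finv x m J nb h tau w =
     (let hv = stack m J h; tv = stack m J tau;
          B = (\<Sum>p<m * J. w $ p * (hv $ p)\<^sup>2 * beta K mreg sig Finv x (tv $ p));
          Sig = avar K sig fX x * scalar_prod w (Smat fe Finv m J nb h tau *\<^sub>v w)
      in B\<^sup>2 + Sig)"

end

theory Submission
  imports Defs
begin

definition bf :: "nat \<Rightarrow> (nat \<Rightarrow> nat \<Rightarrow> real) \<Rightarrow> (nat \<Rightarrow> real) \<Rightarrow> (nat \<Rightarrow> real) \<Rightarrow> real" where
  "bf J A x y = (\<Sum>i<J. \<Sum>j<J. A i j * x i * y j)"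

definition nsq :: "nat \<Rightarrow> (nat \<Rightarrow> real) \<Rightarrow> real" where
  "nsq J x = (\<Sum>i<J. (x i)\<^sup>2)"

lemma compact_cube:
  "compact (PiE UNIV (\<lambda>j::nat. if j < J then {-1..1::real} else {0}))"
proof -
  have "compactin (product_topology (\<lambda>i. euclidean) UNIV)
          (PiE UNIV (\<lambda>j::nat. if j < J then {-1..1::real} else {0}))"
    by (subst compactin_PiE) auto
  then show ?thesis by (simp add: euclidean_product_topology)
qed

lemma cont_nsq: "continuous_on UNIV (nsq J)"
  unfolding nsq_def
  by (intro continuous_intros continuous_on_product_then_coordinatewise continuous_on_id)

lemma cont_bf: "continuous_on S (\<lambda>x. bf J A x x)"
  unfolding bf_def
  by (intro continuous_intros continuous_on_product_then_coordinatewise continuous_on_id)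

lemma bf_expand:
  "bf J A (\<lambda>i. u i + t * g i) (\<lambda>i. u i + t * g i)
     = bf J A u u + t * bf J A u g + t * bf J A g u + t\<^sup>2 * bf J A g g"
  unfolding bf_def
  by (simp add: algebra_simps power2_eq_square sum.distrib sum_distrib_left)

lemma nsq_expand:
  "nsq J (\<lambda>i. u i + t * g i) = nsq J u + 2 * t * (\<Sum>i<J. u i * g i) + t\<^sup>2 * nsq J g"
  unfolding nsq_def
  by (simp add: algebra_simps power2_eq_square sum.distrib sum_distrib_left)

lemma bf_sym: assumes "\<And>i j. A i j = A j i" shows "bf J A u g = bf J A g u"
  unfolding bf_def
  by (subst sum.swap) (simp add: assms mult.commute mult.left_commute)

lemma bf_row: "bf J A g u = (\<Sum>i<J. g i * (\<Sum>j<J. A i j * u j))"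
  unfolding bf_def by (simp add: sum_distrib_left algebra_simps)

lemma quad_nonneg_lin:
  fixes G H :: real
  assumes "\<And>t. 2 * t * G + t\<^sup>2 * H \<ge> 0" "G \<ge> 0"
  shows "G = 0"
proof (rule ccontr)
  assume "G \<noteq> 0"
  then have Gp: "G > 0" using assms(2) by simp
  define d where "d = \<bar>H\<bar> + 1"
  have d: "d > 0" "H < d" unfolding d_def by auto
  define t where "t = - G / d"
  have td: "t * d = - G" unfolding t_def using d by simp
  have "(2 * t * G + t\<^sup>2 * H) * d\<^sup>2 = 2 * (t * d) * G * d + (t * d)\<^sup>2 * H"
    by (simp add: algebra_simps power2_eq_square)
  also have "\<dots> = G\<^sup>2 * (H - 2 * d)" unfolding td by (simp add: algebra_simps power2_eq_square)
  also have "\<dots> < 0" using d Gp by (simp add: mult_pos_neg)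
  finally have "(2 * t * G + t\<^sup>2 * H) * d\<^sup>2 < 0" .
  then have "2 * t * G + t\<^sup>2 * H < 0" using d
    by (metis mult_nonneg_nonneg not_le zero_le_power2)
  then show False using assms(1)[of t] by simp
qed

lemma rayleigh_min:
  fixes A :: "nat \<Rightarrow> nat \<Rightarrow> real"
  assumes J: "J \<ge> 1" and sym: "\<And>i j. A i j = A j i"
  shows "\<exists>\<mu> u. nsq J u = 1 \<and> (\<forall>i<J. (\<Sum>j<J. A i j * u j) = \<mu> * u i)
            \<and> (\<forall>x. bf J A x x \<ge> \<mu> * nsq J x)"
proof -
  define C where "C = PiE UNIV (\<lambda>j::nat. if j < J then {-1..1::real} else {0})"
  define K where "K = C \<inter> (nsq J -` {1})"
  have "closed (nsq J -` {1})"
    by (rule closed_vimage) (auto intro: cont_nsq)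
  then have cK: "compact K" unfolding K_def C_def using compact_cube by blast
  define e0 where "e0 = (\<lambda>j::nat. if j = 0 then 1 else (0::real))"
  have "e0 \<in> K"
  proof -
    have "e0 \<in> C" unfolding C_def e0_def using J by auto
    moreover have "nsq J e0 = 1"
    proof -
      have "(\<lambda>i. (e0 i)\<^sup>2) = (\<lambda>i. if i = 0 then 1 else 0)" by (auto simp: e0_def)
      then show ?thesis unfolding nsq_def using J by (simp only:) simp
    qed
    ultimately show ?thesis unfolding K_def by auto
  qed
  then have "K \<noteq> {}" by auto
  from continuous_attains_inf[OF cK this cont_bf]
  obtain u where uK: "u \<in> K" and umin: "\<And>y. y \<in> K \<Longrightarrow> bf J A u u \<le> bf J A y y"
    by blast
  define \<mu> where "\<mu> = bf J A u u"
  have nu: "nsq J u = 1" using uK unfolding K_def by auto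
  have lower: "bf J A x x \<ge> \<mu> * nsq J x" for x
  proof (cases "nsq J x = 0")
    case True
    then have "\<forall>i<J. x i = 0" unfolding nsq_def
      by (subst (asm) sum_nonneg_eq_0_iff) auto
    then have "bf J A x x = 0" unfolding bf_def by simp
    then show ?thesis using True by simp
  next
    case False
    define r where "r = nsq J x"
    have r0: "r > 0" using False unfolding r_def nsq_def
      by (metis (no_types, lifting) dual_order.antisym sum_nonneg zero_le_power2 not_le)
    define y where "y = (\<lambda>j. if j < J then x j / sqrt r else 0)"
    have yC: "y \<in> C"
    proof -
      have "\<bar>x j\<bar> \<le> sqrt r" if "j < J" for j
      proof -
        have "(x j)\<^sup>2 \<le> r" unfolding r_def nsq_def
          using that by (intro member_le_sum) auto
        then show ?thesis using real_le_rsqrt by (metis real_sqrt_abs real_sqrt_le_mono)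
      qed
      then show ?thesis unfolding C_def y_def using r0
        by (auto simp: abs_le_iff divide_le_eq le_divide_eq) (metis minus_le_iff)
    qed
    have "nsq J y = nsq J x / r" unfolding nsq_def y_def
      using r0 by (simp add: sum_divide_distrib power_divide)
    then have "nsq J y = 1" using r0 r_def by simp
    then have "y \<in> K" using yC unfolding K_def by auto
    then have "\<mu> \<le> bf J A y y" using umin \<mu>_def by simp
    also have "bf J A y y = bf J A x x / r" unfolding bf_def y_def using r0
      by (simp add: sum_divide_distrib)
    finally show ?thesis using r0 r_def by (simp add: le_divide_eq mult.commute)
  qed
  define g where "g = (\<lambda>i. (\<Sum>j<J. A i j * u j) - \<mu> * u i)"
  have ineq: "2 * t * nsq J g + t\<^sup>2 * (bf J A g g - \<mu> * nsq J g) \<ge> 0" for t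
  proof -
    have "bf J A (\<lambda>i. u i + t * g i) (\<lambda>i. u i + t * g i) - \<mu> * nsq J (\<lambda>i. u i + t * g i) \<ge> 0"
      using lower by simp
    moreover have "bf J A g u = nsq J g + \<mu> * (\<Sum>i<J. u i * g i)"
      unfolding bf_row nsq_def g_def
      by (simp add: algebra_simps power2_eq_square sum.distrib sum_distrib_left sum_subtractf)
    ultimately show ?thesis
      unfolding bf_expand nsq_expand using bf_sym[OF sym, where u=u and g=g and J=J] nu \<mu>_def
      by (simp add: algebra_simps)
  qed
  have "nsq J g = 0"
    by (rule quad_nonneg_lin[OF ineq]) (simp add: nsq_def sum_nonneg)
  then have "\<forall>i<J. g i = 0" unfolding nsq_def
    by (subst (asm) sum_nonneg_eq_0_iff) auto
  then have "\<forall>i<J. (\<Sum>j<J. A i j * u j) = \<mu> * u i" unfolding g_def by simp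
  then show ?thesis using nu lower by blast
qed

lemma eig_from_fun:
  fixes M :: "real mat"
  assumes M: "M \<in> carrier_mat J J" and nu: "nsq J u = 1"
    and ev: "\<forall>i<J. (\<Sum>j<J. M $$ (i, j) * u j) = \<mu> * u i"
  shows "eigenvalue M \<mu>"
proof -
  define v where "v = Matrix.vec J u"
  have v: "v \<in> carrier_vec J" unfolding v_def by simp
  have "v \<noteq> 0\<^sub>v J"
  proof
    assume "v = 0\<^sub>v J"
    then have "\<forall>i<J. u i = 0" unfolding v_def by (metis index_vec index_zero_vec(1))
    then have "nsq J u = 0" unfolding nsq_def by simp
    then show False using nu by simp
  qed
  moreover have "M *\<^sub>v v = \<mu> \<cdot>\<^sub>v v"
  proof (rule eq_vecI)
    fix i assume "i < dim_vec (\<mu> \<cdot>\<^sub>v v)"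
    then have i: "i < J" using v by simp
    have "(M *\<^sub>v v) $ i = row M i \<bullet> v" using M i by simp
    also have "\<dots> = (\<Sum>j<J. M $$ (i, j) * u j)"
      unfolding scalar_prod_def v_def using M i by (simp add: lessThan_atLeast0)
    also have "\<dots> = (\<mu> \<cdot>\<^sub>v v) $ i" using ev i v unfolding v_def by simp
    finally show "(M *\<^sub>v v) $ i = (\<mu> \<cdot>\<^sub>v v) $ i" .
  qed (use M v in simp)
  ultimately show ?thesis unfolding eigenvalue_def eigenvector_def using M v by auto
qed

lemma rayleigh_bounds:
  fixes M :: "real mat"
  assumes J: "J \<ge> 1" and M: "M \<in> carrier_mat J J"
    and sym: "\<And>i j. i < J \<Longrightarrow> j < J \<Longrightarrow> M $$ (i, j) = M $$ (j, i)"
    and eig: "\<And>e. eigenvalue M e \<Longrightarrow> lo < e \<and> e < hi"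
  shows "lo * nsq J x \<le> bf J (\<lambda>i j. M $$ (i, j)) x x"
    and "bf J (\<lambda>i j. M $$ (i, j)) x x \<le> hi * nsq J x"
proof -
  define A where "A = (\<lambda>i j. if i < J \<and> j < J then M $$ (i, j) else 0)"
  have Asym: "\<And>i j. A i j = A j i" unfolding A_def using sym by auto
  have bfA: "bf J A y y = bf J (\<lambda>i j. M $$ (i, j)) y y" for y
    unfolding bf_def A_def by (intro sum.cong refl) auto
  have nsq0: "nsq J x \<ge> 0" unfolding nsq_def by (simp add: sum_nonneg)
  obtain \<mu> u where nu: "nsq J u = 1" and ev: "\<forall>i<J. (\<Sum>j<J. A i j * u j) = \<mu> * u i"
    and lw: "\<forall>x. bf J A x x \<ge> \<mu> * nsq J x"
    using rayleigh_min[where A=A, OF J Asym] by blast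
  have "eigenvalue M \<mu>"
    by (rule eig_from_fun[OF M nu]) (use ev in \<open>simp add: A_def\<close>)
  then have "lo < \<mu>" using eig by blast
  then have "lo * nsq J x \<le> \<mu> * nsq J x" using nsq0 by (simp add: mult_right_mono)
  then show "lo * nsq J x \<le> bf J (\<lambda>i j. M $$ (i, j)) x x" using lw bfA by (metis order_trans)
  define A' where "A' = (\<lambda>i j. - A i j)"
  have Asym': "\<And>i j. A' i j = A' j i" unfolding A'_def using Asym by auto
  obtain \<mu>' u' where nu': "nsq J u' = 1" and ev': "\<forall>i<J. (\<Sum>j<J. A' i j * u' j) = \<mu>' * u' i"
    and lw': "\<forall>x. bf J A' x x \<ge> \<mu>' * nsq J x"
    using rayleigh_min[where A=A', OF J Asym'] by blast
  have "\<forall>i<J. (\<Sum>j<J. M $$ (i, j) * u' j) = (- \<mu>') * u' i"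
  proof (intro allI impI)
    fix i assume i: "i < J"
    have "(\<Sum>j<J. M $$ (i, j) * u' j) = - (\<Sum>j<J. A' i j * u' j)"
      unfolding A'_def A_def using i by (simp add: sum_negf)
    then show "(\<Sum>j<J. M $$ (i, j) * u' j) = (- \<mu>') * u' i" using ev' i by simp
  qed
  then have "eigenvalue M (- \<mu>')" by (rule eig_from_fun[OF M nu'])
  then have "- \<mu>' < hi" using eig by blast
  moreover have "bf J A' x x = - bf J A x x" unfolding bf_def A'_def
    by (simp add: sum_negf)
  moreover have "\<mu>' * nsq J x \<le> bf J A' x x" using lw' by blast
  moreover have "(- \<mu>') * nsq J x \<le> hi * nsq J x"
    using \<open>- \<mu>' < hi\<close> nsq0 by (intro mult_right_mono) auto
  ultimately show "bf J (\<lambda>i j. M $$ (i, j)) x x \<le> hi * nsq J x"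
    using bfA[of x] by linarith
qed

lemma Fe_diff:
  fixes fe Fe :: "real \<Rightarrow> real"
  assumes Fe: "\<forall>t. Fe t = (LINT u:{..t}|lborel. fe u)" and int: "integrable lborel fe"
    and ab: "a \<le> b"
  shows "Fe b - Fe a = (\<integral>u. fe u * indicator {a<..b} u \<partial>lborel)"
proof -
  have FeI: "Fe t = (\<integral>u. fe u * indicator {..t} u \<partial>lborel)" for t
    using Fe unfolding set_lebesgue_integral_def by (simp add: mult.commute)
  have "Fe b - Fe a = (\<integral>u. fe u * indicator {..b} u - fe u * indicator {..a} u \<partial>lborel)"
  proof -
    have ib: "integrable lborel (\<lambda>u. fe u * indicator {..t} u)" for t
      by (auto intro: integrable_real_mult_indicator int)
    show ?thesis unfolding FeI
      using Bochner_Integration.integral_diff[OF ib[of b] ib[of a]] by simp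
  qed
  also have "\<dots> = (\<integral>u. fe u * indicator {a<..b} u \<partial>lborel)"
    using ab by (intro Bochner_Integration.integral_cong refl) (auto simp: indicator_def)
  finally show ?thesis .
qed

lemma Fe_int_bounds:
  fixes fe :: "real \<Rightarrow> real"
  assumes int: "integrable lborel fe" and ab: "a \<le> b"
  shows "(\<And>u. a \<le> u \<Longrightarrow> u \<le> b \<Longrightarrow> c \<le> fe u) \<Longrightarrow> c * (b - a) \<le> (\<integral>u. fe u * indicator {a<..b} u \<partial>lborel)"
    and "(\<And>u. a \<le> u \<Longrightarrow> u \<le> b \<Longrightarrow> fe u \<le> C) \<Longrightarrow> (\<integral>u. fe u * indicator {a<..b} u \<partial>lborel) \<le> C * (b - a)"
proof -
  have i1: "integrable lborel (\<lambda>u. fe u * indicator {a<..b} u)"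
    by (auto intro: integrable_real_mult_indicator int)
  have ii: "integrable lborel (indicator {a<..b} :: real \<Rightarrow> real)"
    using ab by (intro integrable_real_indicator) auto
  have mi: "(\<integral>u. indicator {a<..b} u \<partial>lborel) = b - a" using ab by simp
  have ic: "integrable lborel (\<lambda>u. k * indicator {a<..b} u)" for k :: real
    using ii by (rule integrable_mult_right)
  {
    assume bnd: "\<And>u. a \<le> u \<Longrightarrow> u \<le> b \<Longrightarrow> c \<le> fe u"
    have pw1: "c * indicator {a<..b} u \<le> fe u * indicator {a<..b} u" for u
      using bnd[of u] by (auto simp: indicator_def)
    have "c * (b - a) = (\<integral>u. c * indicator {a<..b} u \<partial>lborel)" using mi by simp
    also have "\<dots> \<le> (\<integral>u. fe u * indicator {a<..b} u \<partial>lborel)"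
      by (rule integral_mono[OF ic i1 pw1])
    finally show "c * (b - a) \<le> (\<integral>u. fe u * indicator {a<..b} u \<partial>lborel)" .
  }
  {
    assume bnd: "\<And>u. a \<le> u \<Longrightarrow> u \<le> b \<Longrightarrow> fe u \<le> C"
    have pw2: "fe u * indicator {a<..b} u \<le> C * indicator {a<..b} u" for u
      using bnd[of u] by (auto simp: indicator_def)
    have "(\<integral>u. fe u * indicator {a<..b} u \<partial>lborel) \<le> (\<integral>u. C * indicator {a<..b} u \<partial>lborel)"
      by (rule integral_mono[OF i1 ic pw2])
    also have "\<dots> = C * (b - a)" using mi by simp
    finally show "(\<integral>u. fe u * indicator {a<..b} u \<partial>lborel) \<le> C * (b - a)" .
  }
qed

lemma Fe_cheb:
  fixes fe Fe :: "real \<Rightarrow> real"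
  assumes Fe: "\<forall>t. Fe t = (LINT u:{..t}|lborel. fe u)" and int: "integrable lborel fe"
    and tot: "(LINT u|lborel. fe u) = 1" and pos: "\<forall>t. fe t > 0"
    and m2i: "integrable lborel (\<lambda>u. u\<^sup>2 * fe u)" and m2: "(LINT u|lborel. u\<^sup>2 * fe u) = 1"
    and a: "a > 0"
  shows "Fe (- a) \<le> 1 / a\<^sup>2" and "1 - Fe a \<le> 1 / a\<^sup>2"
proof -
  have FeI: "Fe t = (\<integral>u. fe u * indicator {..t} u \<partial>lborel)" for t
    using Fe unfolding set_lebesgue_integral_def by (simp add: mult.commute)
  have ib: "integrable lborel (\<lambda>u. fe u * indicator {..t} u)" for t
    by (auto intro: integrable_real_mult_indicator int)
  have i2: "integrable lborel (\<lambda>u. u\<^sup>2 * fe u / a\<^sup>2)"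
    using m2i by (rule integrable_divide)
  have int2: "(\<integral>u. u\<^sup>2 * fe u / a\<^sup>2 \<partial>lborel) = 1 / a\<^sup>2" using m2 by simp
  have pw1: "fe u * indicator {..-a} u \<le> u\<^sup>2 * fe u / a\<^sup>2" for u
  proof (cases "u \<le> -a")
    case True
    then have "a\<^sup>2 \<le> u\<^sup>2" using a by (simp add: abs_le_square_iff[symmetric] abs_if)
    then have "fe u * a\<^sup>2 \<le> u\<^sup>2 * fe u" using pos by (simp add: mult.commute mult_left_mono)
    then show ?thesis using True a by (simp add: le_divide_eq)
  next
    case False
    have "0 \<le> u\<^sup>2 * fe u" using pos[rule_format, of u] by simp
    then show ?thesis using False a by (simp add: indicator_def)
  qed
  show "Fe (- a) \<le> 1 / a\<^sup>2" unfolding FeI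
    using integral_mono[OF ib i2 pw1] m2 by simp
  have "1 - Fe a = (\<integral>u. fe u - fe u * indicator {..a} u \<partial>lborel)"
    unfolding FeI using Bochner_Integration.integral_diff[OF int ib[of a]] tot by simp
  also have "\<dots> \<le> (\<integral>u. u\<^sup>2 * fe u / a\<^sup>2 \<partial>lborel)"
  proof (rule integral_mono)
    show "integrable lborel (\<lambda>u. fe u - fe u * indicator {..a} u)"
      using int ib by (rule Bochner_Integration.integrable_diff)
    show "integrable lborel (\<lambda>u. u\<^sup>2 * fe u / a\<^sup>2)" by (rule i2)
    fix u
    show "fe u - fe u * indicator {..a} u \<le> u\<^sup>2 * fe u / a\<^sup>2"
    proof (cases "a < u")
      case True
      then have "a\<^sup>2 \<le> u\<^sup>2" using a by (simp add: power_mono)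
      then have "fe u * a\<^sup>2 \<le> u\<^sup>2 * fe u" using pos by (simp add: mult.commute mult_left_mono)
      then show ?thesis using True a by (simp add: le_divide_eq indicator_def)
    next
      case False
      have "0 \<le> u\<^sup>2 * fe u" using pos[rule_format, of u] by simp
      then show ?thesis using False a by (simp add: indicator_def)
    qed
  qed
  finally show "1 - Fe a \<le> 1 / a\<^sup>2" using m2 by simp
qed

lemma Finv_bound:
  fixes fe Fe :: "real \<Rightarrow> real"
  assumes Fe: "\<forall>t. Fe t = (LINT u:{..t}|lborel. fe u)" and int: "integrable lborel fe"
    and tot: "(LINT u|lborel. fe u) = 1" and pos: "\<forall>t. fe t > 0"
    and cont: "continuous_on UNIV fe"
    and m2i: "integrable lborel (\<lambda>u. u\<^sup>2 * fe u)" and m2: "(LINT u|lborel. u\<^sup>2 * fe u) = 1"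
    and d: "\<delta> > 0"
  shows "\<exists>C. \<forall>\<tau>. \<delta> < \<tau> \<and> \<tau> < 1 - \<delta> \<longrightarrow> \<bar>qinv Fe \<tau>\<bar> \<le> C"
proof -
  define a where "a = sqrt (2 / \<delta>)"
  have a: "a > 0" unfolding a_def using d by simp
  have a2: "1 / a\<^sup>2 = \<delta> / 2" unfolding a_def using d by simp
  have lo: "Fe (- a) \<le> \<delta> / 2" and hi: "1 - Fe a \<le> \<delta> / 2"
    using Fe_cheb[OF Fe int tot pos m2i m2 a] a2 by auto
  have mono: "Fe x < Fe y" if lt: "x < y" for x y
  proof -
    obtain z where z: "z \<in> {x..y}" and zmin: "\<forall>u\<in>{x..y}. fe z \<le> fe u"
      using continuous_attains_inf[of "{x..y}" fe] lt continuous_on_subset[OF cont, of "{x..y}"]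
      by auto
    have "fe z * (y - x) \<le> (\<integral>u. fe u * indicator {x<..y} u \<partial>lborel)"
      by (rule Fe_int_bounds(1)[OF int]) (use that zmin in auto)
    also have "\<dots> = Fe y - Fe x" using Fe_diff[OF Fe int] that by simp
    finally have "fe z * (y - x) \<le> Fe y - Fe x" .
    moreover have "fe z * (y - x) > 0" using pos that by simp
    ultimately show ?thesis by linarith
  qed
  obtain Cm where Cm: "\<forall>u\<in>{-a..a}. fe u \<le> Cm"
    using continuous_attains_sup[of "{-a..a}" fe] a continuous_on_subset[OF cont, of "{-a..a}"]
    by auto
  have Cm0: "Cm \<ge> 0"
  proof -
    have "fe 0 \<le> Cm" using Cm a by simp
    then show ?thesis using pos[rule_format, of 0] by linarith
  qed
  have lip: "Cm-lipschitz_on {-a..a} Fe"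
    unfolding lipschitz_on_def
  proof (intro conjI Cm0 ballI)
    fix x y assume x: "x \<in> {-a..a}" and y: "y \<in> {-a..a}"
    have key: "Fe q - Fe p \<le> Cm * (q - p)" if "p \<le> q" "p \<in> {-a..a}" "q \<in> {-a..a}" for p q
    proof -
      have "(\<integral>u. fe u * indicator {p<..q} u \<partial>lborel) \<le> Cm * (q - p)"
        by (rule Fe_int_bounds(2)[OF int that(1)]) (use that Cm in auto)
      then show ?thesis using Fe_diff[OF Fe int that(1)] by simp
    qed
    show "dist (Fe x) (Fe y) \<le> Cm * dist x y"
    proof (cases "x \<le> y")
      case True
      then have "Fe x \<le> Fe y" using mono by (metis less_eq_real_def)
      then show ?thesis using key[OF True x y] True by (simp add: dist_real_def)
    next
      case False
      then have "Fe y \<le> Fe x" using mono by (metis less_eq_real_def not_le)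
      then show ?thesis using key[of y x] False x y by (simp add: dist_real_def dist_commute)
    qed
  qed
  have contF: "continuous_on {-a..a} Fe" by (rule lipschitz_on_continuous_on[OF lip])
  show ?thesis
  proof (intro exI allI impI)
    fix \<tau> assume t: "\<delta> < \<tau> \<and> \<tau> < 1 - \<delta>"
    have "\<exists>q. -a \<le> q \<and> q \<le> a \<and> Fe q = \<tau>"
      by (rule IVT'[OF _ _ _ contF]) (use lo hi t a d in auto)
    then obtain q where q: "-a \<le> q" "q \<le> a" "Fe q = \<tau>" by blast
    have "qinv Fe \<tau> = q" unfolding qinv_def
    proof (rule the_equality)
      show "Fe q = \<tau>" by (rule q(3))
      fix q' assume "Fe q' = \<tau>"
      then show "q' = q" using mono[of q' q] mono[of q q'] q(3)
        by (cases q' q rule: linorder_cases) auto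
    qed
    then show "\<bar>qinv Fe \<tau>\<bar> \<le> a" using q by simp
  qed
qed

definition Hb :: "real \<Rightarrow> real \<Rightarrow> (nat \<Rightarrow> nat) \<Rightarrow> nat \<Rightarrow> real" where
  "Hb \<alpha> \<nu> nb i = \<alpha> * real (nb i) powr (- \<nu>)"

lemma Hb_pos: "\<alpha> > 0 \<Longrightarrow> nb i > 0 \<Longrightarrow> Hb \<alpha> \<nu> nb i > 0"
  unfolding Hb_def by simp

lemma Rmat_bw:
  assumes "a < J" "b < J" "\<alpha> > 0" "nb i > 0"
  shows "Rmat fe Finv J (bw \<alpha> \<nu> nb) tau i $$ (a, b) = R1mat fe Finv J tau i $$ (a, b) / Hb \<alpha> \<nu> nb i"
proof -
  have H: "Hb \<alpha> \<nu> nb i > 0" using assms Hb_pos by blast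
  have "sqrt (Hb \<alpha> \<nu> nb i * Hb \<alpha> \<nu> nb i) = Hb \<alpha> \<nu> nb i" using H by simp
  then show ?thesis using assms H
    unfolding Rmat_def R1mat_def Rent_def bw_def Hb_def[symmetric] by simp
qed

lemma bf_Smat:
  assumes J: "J \<ge> 1" and nbp: "\<forall>i\<in>{1..m}. nb i > 0" and al: "\<alpha> > 0"
  shows "bf (m * J) (\<lambda>p q. Smat fe Finv m J nb (bw \<alpha> \<nu> nb) tau $$ (p, q)) x y
     = (\<Sum>i<m. bf J (\<lambda>a b. R1mat fe Finv J tau (i + 1) $$ (a, b)) (\<lambda>j. x (j + i * J)) (\<lambda>j. y (j + i * J))
            / (real (nb (i + 1)) * Hb \<alpha> \<nu> nb (i + 1)))"
proof -
  let ?S = "Smat fe Finv m J nb (bw \<alpha> \<nu> nb) tau"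
  let ?R = "\<lambda>i a b. R1mat fe Finv J tau (i + 1) $$ (a, b)"
  let ?D = "\<lambda>i. real (nb (i + 1)) * Hb \<alpha> \<nu> nb (i + 1)"
  have ent: "?S $$ (j + i * J, j' + i' * J) = (if i = i' then ?R i j j' / ?D i else 0)"
    if "i < m" "i' < m" "j < J" "j' < J" for i i' j j'
  proof -
    have lt1: "jj + ii * J < m * J" if "ii < m" "jj < J" for ii jj
    proof -
      have "jj + ii * J < (ii + 1) * J" using that by simp
      also have "(ii + 1) * J \<le> m * J" using that by (intro mult_le_mono1) simp
      finally show ?thesis .
    qed
    have lt: "j + i * J < m * J" "j' + i' * J < m * J" using lt1 that by auto
    have dm: "(j + i * J) div J = i" "(j + i * J) mod J = j" "(j' + i' * J) div J = i'" "(j' + i' * J) mod J = j'"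
      using that J by auto
    have nbp': "nb (i + 1) > 0" using nbp that by auto
    show ?thesis
    proof (cases "i = i'")
      case False then show ?thesis using lt dm by (simp add: Smat_def)
    next
      case True
      have "?S $$ (j + i * J, j' + i' * J) = Rmat fe Finv J (bw \<alpha> \<nu> nb) tau (i + 1) $$ (j, j') / real (nb (i + 1))"
        using lt dm True by (simp add: Smat_def)
      then show ?thesis using True Rmat_bw[where nb=nb and i="i+1" and fe=fe and Finv=Finv and \<nu>=\<nu> and tau=tau, OF that(3,4) al nbp'] by simp
    qed
  qed
  have inner: "(\<Sum>i'<m. \<Sum>j'<J. ?S $$ (j + i * J, j' + i' * J) * x (j + i * J) * y (j' + i' * J))
        = (\<Sum>j'<J. ?R i j j' / ?D i * x (j + i * J) * y (j' + i * J))" if i: "i < m" and j: "j < J" for i j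
  proof -
    have "(\<Sum>i'<m. \<Sum>j'<J. ?S $$ (j + i * J, j' + i' * J) * x (j + i * J) * y (j' + i' * J))
        = (\<Sum>i'<m. if i' = i then (\<Sum>j'<J. ?R i j j' / ?D i * x (j + i * J) * y (j' + i * J)) else 0)"
      using i j ent by (intro sum.cong refl) auto
    also have "\<dots> = (\<Sum>j'<J. ?R i j j' / ?D i * x (j + i * J) * y (j' + i * J))"
      using i by simp
    finally show ?thesis .
  qed
  have "bf (m * J) (\<lambda>p q. ?S $$ (p, q)) x y
      = (\<Sum>i<m. \<Sum>j<J. \<Sum>i'<m. \<Sum>j'<J. ?S $$ (j + i * J, j' + i' * J) * x (j + i * J) * y (j' + i' * J))"
    unfolding bf_def sum_mult_product by simp
  also have "\<dots> = (\<Sum>i<m. \<Sum>j<J. \<Sum>j'<J. ?R i j j' / ?D i * x (j + i * J) * y (j' + i * J))"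
    by (rule sum.cong[OF refl], rule sum.cong[OF refl], rule inner) auto
  also have "\<dots> = (\<Sum>i<m. bf J (?R i) (\<lambda>j. x (j + i * J)) (\<lambda>j. y (j + i * J)) / ?D i)"
    unfolding bf_def by (simp add: sum_divide_distrib)
  finally show ?thesis .
qed

lemma quad_sum:
  fixes A :: "real mat"
  assumes A: "A \<in> carrier_mat N N" and x: "dim_vec x = N" and y: "dim_vec y = N"
  shows "scalar_prod x (A *\<^sub>v y) = bf N (\<lambda>p q. A $$ (p, q)) (\<lambda>p. x $ p) (\<lambda>p. y $ p)"
proof -
  have "scalar_prod x (A *\<^sub>v y) = (\<Sum>p<N. x $ p * (\<Sum>q<N. A $$ (p, q) * y $ q))"
    unfolding scalar_prod_def using A x y
    by (simp add: lessThan_atLeast0 scalar_prod_def mult.commute)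
  also have "\<dots> = bf N (\<lambda>p q. A $$ (p, q)) (\<lambda>p. x $ p) (\<lambda>p. y $ p)"
    unfolding bf_def by (simp add: sum_distrib_left algebra_simps)
  finally show ?thesis .
qed

lemma nsq_pos_vec:
  assumes "dim_vec x = N" "x \<noteq> 0\<^sub>v N"
  shows "nsq N (\<lambda>p. x $ p) > 0"
proof -
  obtain p where p: "p < N" "x $ p \<noteq> 0" using assms by (metis eq_vecI index_zero_vec(1) index_zero_vec(2))
  have "(x $ p)\<^sup>2 \<le> nsq N (\<lambda>p. x $ p)" unfolding nsq_def using p by (intro member_le_sum) auto
  moreover have "(x $ p)\<^sup>2 > 0" using p by simp
  ultimately show ?thesis by linarith
qed

lemma pd_inverse:
  fixes A :: "real mat"
  assumes A: "A \<in> carrier_mat N N"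
    and pd: "\<And>x. dim_vec x = N \<Longrightarrow> x \<noteq> 0\<^sub>v N \<Longrightarrow> scalar_prod x (A *\<^sub>v x) > 0"
  shows "A * the (mat_inverse A) = 1\<^sub>m N \<and> the (mat_inverse A) * A = 1\<^sub>m N
          \<and> the (mat_inverse A) \<in> carrier_mat N N"
proof -
  have "det A \<noteq> 0"
  proof
    assume "det A = 0"
    then obtain v where v: "v \<in> carrier_vec N" "v \<noteq> 0\<^sub>v N" "A *\<^sub>v v = 0\<^sub>v N"
      using det_0_iff_vec_prod_zero[OF A] by blast
    have "scalar_prod v (A *\<^sub>v v) = 0" using v by simp
    then show False using pd[of v] v by simp
  qed
  then have U: "A \<in> Units (ring_mat TYPE(real) N undefined)" by (rule det_non_zero_imp_unit[OF A])
  then obtain B where "mat_inverse A = Some B" using mat_inverse(1)[OF A] by fastforce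
  then show ?thesis using mat_inverse(2)[OF A] by simp
qed

lemma Smat_carrier: "Smat fe Finv m J nb h tau \<in> carrier_mat (m * J) (m * J)"
  unfolding Smat_def by simp

lemma Smat_sym:
  assumes "p < m * J" "q < m * J"
  shows "Smat fe Finv m J nb h tau $$ (p, q) = Smat fe Finv m J nb h tau $$ (q, p)"
proof -
  have "p mod J < J" "q mod J < J" using assms
    by (metis mod_less_divisor mult_0_right neq0_conv not_less_zero)+
  then show ?thesis using assms
    unfolding Smat_def Rmat_def Rent_def by (auto simp: min.commute mult.commute)
qed

lemma quad_bounds:
  assumes J: "J \<ge> 1" and nbp: "\<forall>i\<in>{1..m}. nb i > 0" and al: "\<alpha> > 0"
    and eig: "\<forall>i e. i \<in> {1..m} \<longrightarrow> eigenvalue (R1mat fe Finv J tau i) e \<longrightarrow> lmin < e \<and> e < lmax"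
    and lmin: "0 < lmin"
    and cl: "0 \<le> cl" "\<forall>i<m. cl \<le> 1 / (real (nb (i + 1)) * Hb \<alpha> \<nu> nb (i + 1))"
    and ch: "\<forall>i<m. 1 / (real (nb (i + 1)) * Hb \<alpha> \<nu> nb (i + 1)) \<le> ch"
  shows "lmin * cl * nsq (m * J) x \<le> bf (m * J) (\<lambda>p q. Smat fe Finv m J nb (bw \<alpha> \<nu> nb) tau $$ (p, q)) x x"
    and "bf (m * J) (\<lambda>p q. Smat fe Finv m J nb (bw \<alpha> \<nu> nb) tau $$ (p, q)) x x \<le> lmax * ch * nsq (m * J) x"
proof -
  let ?R = "\<lambda>i a b. R1mat fe Finv J tau (i + 1) $$ (a, b)"
  let ?D = "\<lambda>i. real (nb (i + 1)) * Hb \<alpha> \<nu> nb (i + 1)"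
  let ?x = "\<lambda>i j. x (j + i * J)"
  have nsqsplit: "nsq (m * J) x = (\<Sum>i<m. nsq J (?x i))"
    unfolding nsq_def sum_mult_product by simp
  have nn: "nsq J y \<ge> 0" for y unfolding nsq_def by (simp add: sum_nonneg)
  have bnds: "lmin * nsq J (?x i) \<le> bf J (?R i) (?x i) (?x i) \<and> bf J (?R i) (?x i) (?x i) \<le> lmax * nsq J (?x i)"
    if i: "i < m" for i
  proof -
    have M: "R1mat fe Finv J tau (i + 1) \<in> carrier_mat J J" unfolding R1mat_def Rmat_def by simp
    have sy: "R1mat fe Finv J tau (i + 1) $$ (a, b) = R1mat fe Finv J tau (i + 1) $$ (b, a)"
      if "a < J" "b < J" for a b
      using that unfolding R1mat_def Rmat_def Rent_def by (auto simp: min.commute mult.commute)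
    have ev: "\<And>e. eigenvalue (R1mat fe Finv J tau (i + 1)) e \<Longrightarrow> lmin < e \<and> e < lmax"
    proof -
      fix e assume "eigenvalue (R1mat fe Finv J tau (i + 1)) e"
      moreover have "i + 1 \<in> {1..m}" using i by simp
      ultimately show "lmin < e \<and> e < lmax" using eig by blast
    qed
    show ?thesis using rayleigh_bounds[OF J M sy ev] by blast
  qed
  have Dp: "?D i > 0" if "i < m" for i using nbp that Hb_pos[OF al] by auto
  have "lmin * cl * nsq (m * J) x = (\<Sum>i<m. lmin * cl * nsq J (?x i))"
    unfolding nsqsplit by (simp add: sum_distrib_left)
  also have "\<dots> \<le> (\<Sum>i<m. bf J (?R i) (?x i) (?x i) / ?D i)"
  proof (rule sum_mono)
    fix i assume i: "i \<in> {..<m}"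
    have "lmin * cl * nsq J (?x i) = cl * (lmin * nsq J (?x i))" by simp
    also have "\<dots> \<le> (1 / ?D i) * bf J (?R i) (?x i) (?x i)"
      using bnds[of i] i cl lmin nn[of "?x i"] Dp[of i]
      by (intro mult_mono) auto
    finally show "lmin * cl * nsq J (?x i) \<le> bf J (?R i) (?x i) (?x i) / ?D i" by simp
  qed
  also have "\<dots> = bf (m * J) (\<lambda>p q. Smat fe Finv m J nb (bw \<alpha> \<nu> nb) tau $$ (p, q)) x x"
    using bf_Smat[OF J nbp al] by simp
  finally show "lmin * cl * nsq (m * J) x \<le> bf (m * J) (\<lambda>p q. Smat fe Finv m J nb (bw \<alpha> \<nu> nb) tau $$ (p, q)) x x" .
  have "bf (m * J) (\<lambda>p q. Smat fe Finv m J nb (bw \<alpha> \<nu> nb) tau $$ (p, q)) x x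
        = (\<Sum>i<m. bf J (?R i) (?x i) (?x i) / ?D i)"
    using bf_Smat[OF J nbp al] by simp
  also have "\<dots> \<le> (\<Sum>i<m. lmax * ch * nsq J (?x i))"
  proof (rule sum_mono)
    fix i assume i: "i \<in> {..<m}"
    have b0: "0 \<le> bf J (?R i) (?x i) (?x i)"
    proof -
      have "0 \<le> lmin * nsq J (?x i)" using lmin nn[of "?x i"] by simp
      then show ?thesis using bnds[of i] i by auto
    qed
    have "bf J (?R i) (?x i) (?x i) / ?D i = (1 / ?D i) * bf J (?R i) (?x i) (?x i)" by simp
    also have "\<dots> \<le> ch * (lmax * nsq J (?x i))"
    proof -
      have "0 < 1 / ?D i" using Dp[of i] i by simp
      then have "0 \<le> ch" using ch i by (meson less_imp_le order_trans lessThan_iff)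
      then show ?thesis using bnds[of i] i ch b0 Dp[of i]
        by (intro mult_mono) auto
    qed
    finally show "bf J (?R i) (?x i) (?x i) / ?D i \<le> lmax * ch * nsq J (?x i)" by (simp add: ac_simps)
  qed
  also have "\<dots> = lmax * ch * nsq (m * J) x"
    unfolding nsqsplit by (simp add: sum_distrib_left)
  finally show "bf (m * J) (\<lambda>p q. Smat fe Finv m J nb (bw \<alpha> \<nu> nb) tau $$ (p, q)) x x \<le> lmax * ch * nsq (m * J) x" .
qed

lemma Sw_formula:
  fixes S Si :: "real mat" and F w :: "real Matrix.vec"
  assumes S: "S \<in> carrier_mat N N" and Si: "Si \<in> carrier_mat N N" and inv: "S * Si = 1\<^sub>m N"
    and F: "F \<in> carrier_vec N"
    and w: "w = kD \<cdot>\<^sub>v (c1 \<cdot>\<^sub>v (Si *\<^sub>v ones N) - c2 \<cdot>\<^sub>v (Si *\<^sub>v F))"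
  shows "S *\<^sub>v w = kD \<cdot>\<^sub>v (c1 \<cdot>\<^sub>v ones N - c2 \<cdot>\<^sub>v F)"
proof -
  have o: "ones N \<in> carrier_vec N" unfolding ones_def by simp
  have SS: "S *\<^sub>v (Si *\<^sub>v y) = y" if "y \<in> carrier_vec N" for y
    using that S Si inv by (metis assoc_mult_mat_vec one_mult_mat_vec)
  have d1: "Si *\<^sub>v ones N \<in> carrier_vec N" "Si *\<^sub>v F \<in> carrier_vec N" using Si o F by auto
  have "S *\<^sub>v w = kD \<cdot>\<^sub>v (S *\<^sub>v (c1 \<cdot>\<^sub>v (Si *\<^sub>v ones N) - c2 \<cdot>\<^sub>v (Si *\<^sub>v F)))"
    unfolding w using S d1 by (intro mult_mat_vec) auto
  also have "S *\<^sub>v (c1 \<cdot>\<^sub>v (Si *\<^sub>v ones N) - c2 \<cdot>\<^sub>v (Si *\<^sub>v F))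
      = S *\<^sub>v (c1 \<cdot>\<^sub>v (Si *\<^sub>v ones N)) - S *\<^sub>v (c2 \<cdot>\<^sub>v (Si *\<^sub>v F))"
    using S d1 by (intro mult_minus_distrib_mat_vec) auto
  also have "\<dots> = c1 \<cdot>\<^sub>v ones N - c2 \<cdot>\<^sub>v F"
    using S d1 SS o F by (simp add: mult_mat_vec[OF S])
  finally show ?thesis .
qed

lemma opt_le:
  fixes S Si :: "real mat" and F w :: "real Matrix.vec"
  assumes S: "S \<in> carrier_mat N N" and Si: "Si \<in> carrier_mat N N" and inv: "S * Si = 1\<^sub>m N"
    and F: "F \<in> carrier_vec N"
    and w: "w = kD \<cdot>\<^sub>v (c1 \<cdot>\<^sub>v (Si *\<^sub>v ones N) - c2 \<cdot>\<^sub>v (Si *\<^sub>v F))"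
    and sym: "\<And>p q. p < N \<Longrightarrow> q < N \<Longrightarrow> S $$ (p, q) = S $$ (q, p)"
    and psd: "\<And>x. bf N (\<lambda>p q. S $$ (p, q)) x x \<ge> 0"
    and s1: "(\<Sum>p<N. w $ p) = 1" and sF: "(\<Sum>p<N. w $ p * F $ p) = 0"
    and ch: "c2 = 0 \<or> (\<Sum>p<N. F $ p) = 0"
    and N: "N > 0"
  shows "bf N (\<lambda>p q. S $$ (p, q)) (\<lambda>p. w $ p) (\<lambda>p. w $ p)
       \<le> bf N (\<lambda>p q. S $$ (p, q)) (\<lambda>p. 1 / real N) (\<lambda>p. 1 / real N)"
proof -
  define A where "A = (\<lambda>p q. if p < N \<and> q < N then S $$ (p, q) else 0)"
  have Asym: "\<And>p q. A p q = A q p" unfolding A_def using sym by auto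
  have bfA: "bf N (\<lambda>p q. S $$ (p, q)) x y = bf N A x y" for x y
    unfolding bf_def A_def by (intro sum.cong refl) auto
  define wf where "wf = (\<lambda>p. w $ p)"
  define e where "e = (\<lambda>p. 1 / real N - w $ p)"
  have v: "(\<lambda>p::nat. 1 / real N) = (\<lambda>p. wf p + 1 * e p)" unfolding wf_def e_def by simp
  have wdim: "w \<in> carrier_vec N" unfolding w using Si F by (simp add: ones_def)
  have Sw: "S *\<^sub>v w = kD \<cdot>\<^sub>v (c1 \<cdot>\<^sub>v ones N - c2 \<cdot>\<^sub>v F)"
    by (rule Sw_formula[OF S Si inv F w])
  have rowS: "(\<Sum>q<N. A p q * wf q) = kD * (c1 - c2 * F $ p)" if p: "p < N" for p
  proof -
    have "(\<Sum>q<N. A p q * wf q) = (S *\<^sub>v w) $ p"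
      unfolding A_def wf_def using S p wdim
      by (simp add: scalar_prod_def lessThan_atLeast0)
    also have "\<dots> = kD * (c1 - c2 * F $ p)" unfolding Sw using p F by (simp add: ones_def)
    finally show ?thesis .
  qed
  have se: "(\<Sum>p<N. e p) = 0" unfolding e_def using s1 N by (simp add: sum_subtractf)
  have cross: "bf N A e wf = 0"
  proof -
    have "bf N A e wf = (\<Sum>p<N. e p * (kD * (c1 - c2 * F $ p)))"
      unfolding bf_row using rowS by simp
    also have "\<dots> = kD * c1 * (\<Sum>p<N. e p) - kD * c2 * (\<Sum>p<N. e p * F $ p)"
      by (simp add: algebra_simps sum_distrib_left sum_subtractf)
    also have "(\<Sum>p<N. e p * F $ p) = (\<Sum>p<N. F $ p) / real N"
      unfolding e_def using sF by (simp add: algebra_simps sum_subtractf sum_divide_distrib)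
    finally show ?thesis using se ch by auto
  qed
  have "bf N A (\<lambda>p. 1 / real N) (\<lambda>p. 1 / real N) = bf N A wf wf + bf N A wf e + bf N A e wf + bf N A e e"
    unfolding v bf_expand by simp
  also have "bf N A wf e = bf N A e wf" by (rule bf_sym[OF Asym])
  finally have "bf N A (\<lambda>p. 1 / real N) (\<lambda>p. 1 / real N) = bf N A wf wf + bf N A e e"
    using cross by simp
  moreover have "bf N A e e \<ge> 0" using psd[of e] bfA by simp
  ultimately show ?thesis using bfA unfolding wf_def by simp
qed

lemma Hb_scale: "Hb \<alpha> \<nu> nb i = \<alpha> * Hb 1 \<nu> nb i"
  unfolding Hb_def by simp

lemma Smat_scale_vec:
  assumes J: "J \<ge> 1" and nbp: "\<forall>i\<in>{1..m}. nb i > 0" and al: "\<alpha> > 0"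
    and x: "x \<in> carrier_vec (m * J)"
  shows "Smat fe Finv m J nb (bw \<alpha> \<nu> nb) tau *\<^sub>v x
       = (1 / \<alpha>) \<cdot>\<^sub>v (Smat fe Finv m J nb (bw 1 \<nu> nb) tau *\<^sub>v x)"
proof (rule eq_vecI)
  let ?Sa = "Smat fe Finv m J nb (bw \<alpha> \<nu> nb) tau"
  let ?S1 = "Smat fe Finv m J nb (bw 1 \<nu> nb) tau"
  have ent: "?Sa $$ (p, q) = ?S1 $$ (p, q) / \<alpha>" if "p < m * J" "q < m * J" for p q
  proof -
    have J0: "J > 0" using J by simp
    have md: "p mod J < J" "q mod J < J" using J0 by auto
    have pd: "p div J < m" using that J0 by (simp add: div_less_iff_less_mult)
    then have nb: "nb (p div J + 1) > 0" using nbp by auto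
    show ?thesis
    proof (cases "p div J = q div J")
      case False then show ?thesis using that by (simp add: Smat_def)
    next
      case True
      let ?i = "p div J + 1"
      have e1: "?Sa $$ (p, q) = Rmat fe Finv J (bw \<alpha> \<nu> nb) tau ?i $$ (p mod J, q mod J) / real (nb ?i)"
        using that True unfolding Smat_def by simp
      have e2: "?S1 $$ (p, q) = Rmat fe Finv J (bw 1 \<nu> nb) tau ?i $$ (p mod J, q mod J) / real (nb ?i)"
        using that True unfolding Smat_def by simp
      have H1: "Hb 1 \<nu> nb ?i > 0" using nb by (simp add: Hb_pos)
      show ?thesis unfolding e1 e2
        using Rmat_bw[where nb=nb and i="?i" and \<alpha>=\<alpha>, OF md al nb]
          Rmat_bw[where nb=nb and i="?i" and \<alpha>=1, OF md _ nb] al H1 nb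
        by (simp add: Hb_scale[of \<alpha>])
    qed
  qed
  fix p assume "p < dim_vec ((1 / \<alpha>) \<cdot>\<^sub>v (?S1 *\<^sub>v x))"
  then have p: "p < m * J" unfolding Smat_def by simp
  have "(?Sa *\<^sub>v x) $ p = (\<Sum>q<m * J. ?Sa $$ (p, q) * x $ q)"
    using p x by (simp add: Smat_def scalar_prod_def lessThan_atLeast0 mult.commute)
  also have "\<dots> = (\<Sum>q<m * J. ?S1 $$ (p, q) * x $ q) / \<alpha>"
    using ent p by (simp add: sum_divide_distrib)
  also have "\<dots> = ((1 / \<alpha>) \<cdot>\<^sub>v (?S1 *\<^sub>v x)) $ p"
    using p x by (simp add: Smat_def scalar_prod_def lessThan_atLeast0 mult.commute)
  finally show "(?Sa *\<^sub>v x) $ p = ((1 / \<alpha>) \<cdot>\<^sub>v (?S1 *\<^sub>v x)) $ p" .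
qed (simp add: Smat_def)

lemma c2_zero:
  fixes Sa S1 Sia Si1 :: "real mat" and F :: "real Matrix.vec"
  assumes Sa: "Sa \<in> carrier_mat N N" and S1: "S1 \<in> carrier_mat N N"
    and Sia: "Sia \<in> carrier_mat N N" and Si1: "Si1 \<in> carrier_mat N N"
    and inva: "Sa * Sia = 1\<^sub>m N" and inv1: "Si1 * S1 = 1\<^sub>m N"
    and scale: "\<And>x. x \<in> carrier_vec N \<Longrightarrow> Sa *\<^sub>v x = (1 / \<alpha>) \<cdot>\<^sub>v (S1 *\<^sub>v x)"
    and al: "\<alpha> > 0" and F: "F \<in> carrier_vec N"
    and z: "scalar_prod (ones N) (Si1 *\<^sub>v F) = 0"
  shows "scalar_prod (Sia *\<^sub>v F) (ones N) = 0"
proof -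
  define d where "d = Sia *\<^sub>v F"
  have d: "d \<in> carrier_vec N" unfolding d_def using Sia F by simp
  have Sd: "Sa *\<^sub>v d = F" unfolding d_def using Sa Sia F inva
    by (metis assoc_mult_mat_vec one_mult_mat_vec)
  have S1d: "S1 *\<^sub>v d \<in> carrier_vec N" using S1 d by simp
  have "Si1 *\<^sub>v F = Si1 *\<^sub>v ((1 / \<alpha>) \<cdot>\<^sub>v (S1 *\<^sub>v d))" using Sd scale[OF d] by simp
  also have "\<dots> = (1 / \<alpha>) \<cdot>\<^sub>v (Si1 *\<^sub>v (S1 *\<^sub>v d))" using Si1 S1d by (rule mult_mat_vec)
  also have "Si1 *\<^sub>v (S1 *\<^sub>v d) = d" using Si1 S1 d inv1
    by (metis assoc_mult_mat_vec one_mult_mat_vec)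
  finally have "Si1 *\<^sub>v F = (1 / \<alpha>) \<cdot>\<^sub>v d" .
  then have "scalar_prod (ones N) ((1 / \<alpha>) \<cdot>\<^sub>v d) = 0" using z by simp
  then have "(1 / \<alpha>) * scalar_prod (ones N) d = 0" using d by (simp add: ones_def)
  then have "scalar_prod (ones N) d = 0" using al by simp
  then show ?thesis unfolding d_def[symmetric] using d by (simp add: comm_scalar_prod[of d N] ones_def)
qed

lemma core:
  fixes fe Finv :: "real \<Rightarrow> real" and nb :: "nat \<Rightarrow> nat" and tau :: "nat \<Rightarrow> nat \<Rightarrow> real"
    and w :: "real Matrix.vec"
  assumes J: "J \<ge> 1" and m: "m \<ge> 1" and nbp: "\<forall>i\<in>{1..m}. nb i > 0" and al: "\<alpha> > 0"
    and eig: "\<forall>i e. i \<in> {1..m} \<longrightarrow> eigenvalue (R1mat fe Finv J tau i) e \<longrightarrow> lmin < e \<and> e < lmax"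
    and lmin: "0 < lmin"
    and cl: "0 < cl" "\<forall>i<m. cl \<le> 1 / (real (nb (i + 1)) * Hb \<alpha> \<nu> nb (i + 1))"
    and ch: "\<forall>i<m. 1 / (real (nb (i + 1)) * Hb \<alpha> \<nu> nb (i + 1)) \<le> ch"
    and w: "w = opt_weights fe Finv m J nb (bw \<alpha> \<nu> nb) tau"
    and s1: "(\<Sum>p<m * J. w $ p) = 1"
    and sF: "(\<Sum>p<m * J. w $ p * Fvec Finv m J tau $ p) = 0"
    and choice: "(\<Sum>p<m * J. Fvec Finv m J tau $ p) = 0
       \<or> scalar_prod (ones (m * J)) (Sinv fe Finv m J nb (bw 1 \<nu> nb) tau *\<^sub>v Fvec Finv m J tau) = 0"
  shows "scalar_prod w (Smat fe Finv m J nb (bw \<alpha> \<nu> nb) tau *\<^sub>v w)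
           = bf (m * J) (\<lambda>p q. Smat fe Finv m J nb (bw \<alpha> \<nu> nb) tau $$ (p, q)) (\<lambda>p. w $ p) (\<lambda>p. w $ p)"
    and "bf (m * J) (\<lambda>p q. Smat fe Finv m J nb (bw \<alpha> \<nu> nb) tau $$ (p, q)) (\<lambda>p. w $ p) (\<lambda>p. w $ p)
           \<le> lmax * ch / real (m * J)"
    and "lmin * cl * nsq (m * J) (\<lambda>p. w $ p)
           \<le> bf (m * J) (\<lambda>p q. Smat fe Finv m J nb (bw \<alpha> \<nu> nb) tau $$ (p, q)) (\<lambda>p. w $ p) (\<lambda>p. w $ p)"
proof -
  define N where "N = m * J"
  have N0: "N > 0" unfolding N_def using J m by simp
  define Sa where "Sa = Smat fe Finv m J nb (bw \<alpha> \<nu> nb) tau"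
  define S1 where "S1 = Smat fe Finv m J nb (bw 1 \<nu> nb) tau"
  define F where "F = Fvec Finv m J tau"
  have Sa: "Sa \<in> carrier_mat N N" and S1: "S1 \<in> carrier_mat N N"
    unfolding Sa_def S1_def N_def by (rule Smat_carrier)+
  have F: "F \<in> carrier_vec N" unfolding F_def Fvec_def stack_def N_def by simp
  have qa: "lmin * cl * nsq N x \<le> bf N (\<lambda>p q. Sa $$ (p, q)) x x"
    and qa2: "bf N (\<lambda>p q. Sa $$ (p, q)) x x \<le> lmax * ch * nsq N x" for x
    unfolding N_def Sa_def using quad_bounds[OF J nbp al eig lmin less_imp_le[OF cl(1)] cl(2) ch] by auto
  have cl1: "\<forall>i<m. \<alpha> * cl \<le> 1 / (real (nb (i + 1)) * Hb 1 \<nu> nb (i + 1))"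
  proof (intro allI impI)
    fix i assume i: "i < m"
    have "1 / (real (nb (i + 1)) * Hb 1 \<nu> nb (i + 1)) = \<alpha> * (1 / (real (nb (i + 1)) * Hb \<alpha> \<nu> nb (i + 1)))"
      using al by (simp add: Hb_scale[of \<alpha>])
    moreover have "\<alpha> * cl \<le> \<alpha> * (1 / (real (nb (i + 1)) * Hb \<alpha> \<nu> nb (i + 1)))"
      using cl(2) i al by (intro mult_left_mono) auto
    ultimately show "\<alpha> * cl \<le> 1 / (real (nb (i + 1)) * Hb 1 \<nu> nb (i + 1))" by simp
  qed
  have ch1: "\<forall>i<m. 1 / (real (nb (i + 1)) * Hb 1 \<nu> nb (i + 1)) \<le> \<alpha> * ch"
  proof (intro allI impI)
    fix i assume i: "i < m"
    have "1 / (real (nb (i + 1)) * Hb 1 \<nu> nb (i + 1)) = \<alpha> * (1 / (real (nb (i + 1)) * Hb \<alpha> \<nu> nb (i + 1)))"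
      using al by (simp add: Hb_scale[of \<alpha>])
    moreover have "\<alpha> * (1 / (real (nb (i + 1)) * Hb \<alpha> \<nu> nb (i + 1))) \<le> \<alpha> * ch"
      using ch i al by (intro mult_left_mono) auto
    ultimately show "1 / (real (nb (i + 1)) * Hb 1 \<nu> nb (i + 1)) \<le> \<alpha> * ch" by simp
  qed
  have acl: "0 \<le> \<alpha> * cl" using al cl(1) by simp
  have one: "(0::real) < 1" by simp
  have q1: "lmin * (\<alpha> * cl) * nsq N x \<le> bf N (\<lambda>p q. S1 $$ (p, q)) x x" for x
    unfolding N_def S1_def
    using quad_bounds(1)[OF J nbp one eig lmin acl cl1 ch1] by auto
  have pdgen: "scalar_prod x (A *\<^sub>v x) > 0"
    if A: "A \<in> carrier_mat N N" and q: "\<And>y. c * nsq N y \<le> bf N (\<lambda>p q. A $$ (p, q)) y y"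
      and c: "c > 0" and x: "dim_vec x = N" "x \<noteq> 0\<^sub>v N" for A c x
  proof -
    have "0 < c * nsq N (\<lambda>p. x $ p)" using c nsq_pos_vec[OF x] by simp
    also have "\<dots> \<le> scalar_prod x (A *\<^sub>v x)" using q quad_sum[OF A x(1) x(1)] by simp
    finally show ?thesis .
  qed
  have ia: "Sa * Sinv fe Finv m J nb (bw \<alpha> \<nu> nb) tau = 1\<^sub>m N
      \<and> Sinv fe Finv m J nb (bw \<alpha> \<nu> nb) tau * Sa = 1\<^sub>m N
      \<and> Sinv fe Finv m J nb (bw \<alpha> \<nu> nb) tau \<in> carrier_mat N N"
    unfolding Sinv_def Sa_def[symmetric]
    by (rule pd_inverse[OF Sa]) (rule pdgen[OF Sa qa], use lmin cl in auto)
  have i1: "S1 * Sinv fe Finv m J nb (bw 1 \<nu> nb) tau = 1\<^sub>m N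
      \<and> Sinv fe Finv m J nb (bw 1 \<nu> nb) tau * S1 = 1\<^sub>m N
      \<and> Sinv fe Finv m J nb (bw 1 \<nu> nb) tau \<in> carrier_mat N N"
    unfolding Sinv_def S1_def[symmetric]
    by (rule pd_inverse[OF S1]) (rule pdgen[OF S1 q1], use lmin cl al in auto)
  let ?Sia = "Sinv fe Finv m J nb (bw \<alpha> \<nu> nb) tau"
  let ?Si1 = "Sinv fe Finv m J nb (bw 1 \<nu> nb) tau"
  define d1 where "d1 = ?Sia *\<^sub>v ones N"
  define d2 where "d2 = ?Sia *\<^sub>v F"
  define c1 where "c1 = scalar_prod d2 F"
  define c2 where "c2 = scalar_prod d2 (ones N)"
  define c3 where "c3 = scalar_prod d1 (ones N)"
  have wf: "w = (1 / (c1 * c3 - c2\<^sup>2)) \<cdot>\<^sub>v (c1 \<cdot>\<^sub>v (?Sia *\<^sub>v ones N) - c2 \<cdot>\<^sub>v (?Sia *\<^sub>v F))"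
    unfolding w opt_weights_def Let_def c1_def c2_def c3_def d1_def d2_def F_def N_def by simp
  have ch2: "c2 = 0 \<or> (\<Sum>p<N. F $ p) = 0"
  proof (cases "(\<Sum>p<N. F $ p) = 0")
    case True then show ?thesis by simp
  next
    case False
    then have z: "scalar_prod (ones N) (?Si1 *\<^sub>v F) = 0" using choice unfolding F_def N_def by simp
    have "scalar_prod (?Sia *\<^sub>v F) (ones N) = 0"
    proof (rule c2_zero[OF Sa S1 _ _ _ _ _ al F z])
      show "?Sia \<in> carrier_mat N N" "?Si1 \<in> carrier_mat N N" "Sa * ?Sia = 1\<^sub>m N" "?Si1 * S1 = 1\<^sub>m N"
        using ia i1 by auto
      fix x :: "real Matrix.vec" assume "x \<in> carrier_vec N"
      then show "Sa *\<^sub>v x = (1 / \<alpha>) \<cdot>\<^sub>v (S1 *\<^sub>v x)"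
        unfolding Sa_def S1_def N_def by (rule Smat_scale_vec[OF J nbp al])
    qed
    then show ?thesis unfolding c2_def d2_def by simp
  qed
  have sym: "\<And>p q. p < N \<Longrightarrow> q < N \<Longrightarrow> Sa $$ (p, q) = Sa $$ (q, p)"
    unfolding Sa_def N_def by (rule Smat_sym)
  have psd: "\<And>x. bf N (\<lambda>p q. Sa $$ (p, q)) x x \<ge> 0"
  proof -
    fix x
    have "0 \<le> lmin * cl * nsq N x" using lmin cl unfolding nsq_def by (simp add: sum_nonneg)
    then show "bf N (\<lambda>p q. Sa $$ (p, q)) x x \<ge> 0" using qa[of x] by linarith
  qed
  have ole: "bf N (\<lambda>p q. Sa $$ (p, q)) (\<lambda>p. w $ p) (\<lambda>p. w $ p)
       \<le> bf N (\<lambda>p q. Sa $$ (p, q)) (\<lambda>p. 1 / real N) (\<lambda>p. 1 / real N)"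
    by (rule opt_le[OF Sa _ _ F wf sym psd _ _ ch2 N0])
      (use ia s1 sF in \<open>auto simp: N_def F_def\<close>)
  have "nsq N (\<lambda>p. 1 / real N) = 1 / real N" unfolding nsq_def using N0
    by (simp add: power2_eq_square)
  then have "bf N (\<lambda>p q. Sa $$ (p, q)) (\<lambda>p. 1 / real N) (\<lambda>p. 1 / real N) \<le> lmax * ch / real N"
    using qa2[of "\<lambda>p. 1 / real N"] by simp
  with ole show "bf (m * J) (\<lambda>p q. Smat fe Finv m J nb (bw \<alpha> \<nu> nb) tau $$ (p, q)) (\<lambda>p. w $ p) (\<lambda>p. w $ p)
           \<le> lmax * ch / real (m * J)" unfolding Sa_def N_def by simp
  show "lmin * cl * nsq (m * J) (\<lambda>p. w $ p)
           \<le> bf (m * J) (\<lambda>p q. Smat fe Finv m J nb (bw \<alpha> \<nu> nb) tau $$ (p, q)) (\<lambda>p. w $ p) (\<lambda>p. w $ p)"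
    using qa unfolding Sa_def N_def by simp
  have wdim: "dim_vec w = N" unfolding wf using ia F by (auto simp: ones_def)
  show "scalar_prod w (Smat fe Finv m J nb (bw \<alpha> \<nu> nb) tau *\<^sub>v w)
           = bf (m * J) (\<lambda>p q. Smat fe Finv m J nb (bw \<alpha> \<nu> nb) tau $$ (p, q)) (\<lambda>p. w $ p) (\<lambda>p. w $ p)"
    using quad_sum[OF Sa wdim wdim] unfolding Sa_def N_def by simp
qed

lemma amse_bound:
  fixes fe Finv :: "real \<Rightarrow> real" and nb :: "nat \<Rightarrow> nat" and tau :: "nat \<Rightarrow> nat \<Rightarrow> real"
    and w :: "real Matrix.vec"
  assumes J: "J \<ge> 1" and m: "m \<ge> 1" and nbp: "\<forall>i\<in>{1..m}. nb i > 0" and al: "\<alpha> > 0"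
    and eig: "\<forall>i e. i \<in> {1..m} \<longrightarrow> eigenvalue (R1mat fe Finv J tau i) e \<longrightarrow> lmin < e \<and> e < lmax"
    and lmin: "0 < lmin"
    and cl: "0 < cl" "\<forall>i<m. cl \<le> 1 / (real (nb (i + 1)) * Hb \<alpha> \<nu> nb (i + 1))"
    and ch: "\<forall>i<m. 1 / (real (nb (i + 1)) * Hb \<alpha> \<nu> nb (i + 1)) \<le> ch"
    and w: "w = opt_weights fe Finv m J nb (bw \<alpha> \<nu> nb) tau"
    and s1: "(\<Sum>p<m * J. w $ p) = 1"
    and sF: "(\<Sum>p<m * J. w $ p * Fvec Finv m J tau $ p) = 0"
    and choice: "(\<Sum>p<m * J. Fvec Finv m J tau $ p) = 0
       \<or> scalar_prod (ones (m * J)) (Sinv fe Finv m J nb (bw 1 \<nu> nb) tau *\<^sub>v Fvec Finv m J tau) = 0"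
    and hb: "\<forall>p<m * J. (stack m J (bw \<alpha> \<nu> nb) $ p)\<^sup>2 \<le> Hm"
    and bb: "\<forall>p<m * J. \<bar>beta K mreg sig Finv x (stack m J tau $ p)\<bar> \<le> Bm"
    and av: "avar K sig fX x \<ge> 0"
  shows "0 \<le> amse K mreg sig fX fe Finv x m J nb (bw \<alpha> \<nu> nb) tau w"
    and "amse K mreg sig fX fe Finv x m J nb (bw \<alpha> \<nu> nb) tau w
          \<le> Hm\<^sup>2 * Bm\<^sup>2 * (lmax * ch / (lmin * cl)) + avar K sig fX x * (lmax * ch / real (m * J))"
proof -
  define N where "N = m * J"
  have N0: "N > 0" unfolding N_def using J m by simp
  define Q where "Q = bf N (\<lambda>p q. Smat fe Finv m J nb (bw \<alpha> \<nu> nb) tau $$ (p, q)) (\<lambda>p. w $ p) (\<lambda>p. w $ p)"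
  note co = core[OF J m nbp al eig lmin cl ch w s1 sF choice]
  have Qsp: "scalar_prod w (Smat fe Finv m J nb (bw \<alpha> \<nu> nb) tau *\<^sub>v w) = Q"
    using co(1) unfolding Q_def N_def by simp
  have Qu: "Q \<le> lmax * ch / real N" using co(2) unfolding Q_def N_def by simp
  have Ql: "lmin * cl * nsq N (\<lambda>p. w $ p) \<le> Q" using co(3) unfolding Q_def N_def by simp
  have nsq0: "0 \<le> nsq N (\<lambda>p. w $ p)" unfolding nsq_def by (simp add: sum_nonneg)
  have lc: "lmin * cl > 0" using lmin cl by simp
  have Q0: "0 \<le> Q" using Ql nsq0 lc by (meson mult_nonneg_nonneg less_imp_le order_trans)
  have nsqb: "real N * nsq N (\<lambda>p. w $ p) \<le> lmax * ch / (lmin * cl)"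
  proof -
    have "nsq N (\<lambda>p. w $ p) \<le> Q / (lmin * cl)" using Ql lc by (simp add: le_divide_eq mult.commute)
    also have "\<dots> \<le> (lmax * ch / real N) / (lmin * cl)" using Qu lc by (intro divide_right_mono) auto
    finally have h: "nsq N (\<lambda>p. w $ p) \<le> (lmax * ch / real N) / (lmin * cl)" .
    have "real N * nsq N (\<lambda>p. w $ p) \<le> real N * ((lmax * ch / real N) / (lmin * cl))"
      by (rule mult_left_mono[OF h]) simp
    also have "\<dots> = lmax * ch / (lmin * cl)" using N0 by simp
    finally show ?thesis .
  qed
  have Hm0: "Hm \<ge> 0" using hb N0 unfolding N_def by (metis zero_le_power2 order_trans)
  have Bm0: "Bm \<ge> 0" using bb N0 unfolding N_def by (metis abs_ge_zero order_trans)
  define B where "B = (\<Sum>p<N. w $ p * (stack m J (bw \<alpha> \<nu> nb) $ p)\<^sup>2 * beta K mreg sig Finv x (stack m J tau $ p))"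
  have Babs: "\<bar>B\<bar> \<le> Hm * Bm * (\<Sum>p<N. \<bar>w $ p\<bar>)"
  proof -
    have "\<bar>B\<bar> \<le> (\<Sum>p<N. \<bar>w $ p * (stack m J (bw \<alpha> \<nu> nb) $ p)\<^sup>2 * beta K mreg sig Finv x (stack m J tau $ p)\<bar>)"
      unfolding B_def by (rule sum_abs)
    also have "\<dots> \<le> (\<Sum>p<N. Hm * Bm * \<bar>w $ p\<bar>)"
    proof (rule sum_mono)
      fix p assume p: "p \<in> {..<N}"
      have "\<bar>w $ p * (stack m J (bw \<alpha> \<nu> nb) $ p)\<^sup>2 * beta K mreg sig Finv x (stack m J tau $ p)\<bar>
           = \<bar>w $ p\<bar> * ((stack m J (bw \<alpha> \<nu> nb) $ p)\<^sup>2 * \<bar>beta K mreg sig Finv x (stack m J tau $ p)\<bar>)"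
        by (simp add: abs_mult)
      also have "\<dots> \<le> \<bar>w $ p\<bar> * (Hm * Bm)"
        using hb bb p Hm0 unfolding N_def by (intro mult_left_mono mult_mono) auto
      finally show "\<bar>w $ p * (stack m J (bw \<alpha> \<nu> nb) $ p)\<^sup>2 * beta K mreg sig Finv x (stack m J tau $ p)\<bar>
           \<le> Hm * Bm * \<bar>w $ p\<bar>" by (simp add: mult.commute)
    qed
    also have "\<dots> = Hm * Bm * (\<Sum>p<N. \<bar>w $ p\<bar>)" by (simp add: sum_distrib_left)
    finally show ?thesis .
  qed
  have CS: "(\<Sum>p<N. \<bar>w $ p\<bar>)\<^sup>2 \<le> real N * nsq N (\<lambda>p. w $ p)"
    using sum_squared_le_sum_of_squares[of "\<lambda>p. \<bar>w $ p\<bar>" "{..<N}"]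
    unfolding nsq_def by (simp add: mult.commute)
  have B2: "B\<^sup>2 \<le> Hm\<^sup>2 * Bm\<^sup>2 * (lmax * ch / (lmin * cl))"
  proof -
    have "B\<^sup>2 = \<bar>B\<bar>\<^sup>2" by simp
    also have "\<dots> \<le> (Hm * Bm * (\<Sum>p<N. \<bar>w $ p\<bar>))\<^sup>2" using Babs by (intro power_mono) auto
    also have "\<dots> = Hm\<^sup>2 * Bm\<^sup>2 * (\<Sum>p<N. \<bar>w $ p\<bar>)\<^sup>2" by (simp add: power_mult_distrib)
    also have "\<dots> \<le> Hm\<^sup>2 * Bm\<^sup>2 * (lmax * ch / (lmin * cl))"
      using CS nsqb by (intro mult_left_mono) auto
    finally show ?thesis .
  qed
  have am: "amse K mreg sig fX fe Finv x m J nb (bw \<alpha> \<nu> nb) tau w = B\<^sup>2 + avar K sig fX x * Q"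
    unfolding amse_def Let_def B_def N_def Qsp[symmetric] by simp
  show "0 \<le> amse K mreg sig fX fe Finv x m J nb (bw \<alpha> \<nu> nb) tau w"
    unfolding am using av Q0 by simp
  have "avar K sig fX x * Q \<le> avar K sig fX x * (lmax * ch / real N)" by (rule mult_left_mono[OF Qu av])
  then show "amse K mreg sig fX fe Finv x m J nb (bw \<alpha> \<nu> nb) tau w
          \<le> Hm\<^sup>2 * Bm\<^sup>2 * (lmax * ch / (lmin * cl)) + avar K sig fX x * (lmax * ch / real (m * J))"
    unfolding am using B2 N_def by simp
qed

lemma final_bound:
  fixes fe Finv :: "real \<Rightarrow> real" and nb :: "nat \<Rightarrow> nat" and tau :: "nat \<Rightarrow> nat \<Rightarrow> real"
    and w :: "real Matrix.vec"
  assumes J: "J \<ge> 1" and m: "m \<ge> 1" and nbp: "\<forall>i\<in>{1..m}. nb i > 0" and al: "\<alpha> > 0"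
    and eig: "\<forall>i e. i \<in> {1..m} \<longrightarrow> eigenvalue (R1mat fe Finv J tau i) e \<longrightarrow> lmin < e \<and> e < lmax"
    and lmin: "0 < lmin" and lmax: "lmin < lmax"
    and w: "w = opt_weights fe Finv m J nb (bw \<alpha> \<nu> nb) tau"
    and s1: "(\<Sum>p<m * J. w $ p) = 1"
    and sF: "(\<Sum>p<m * J. w $ p * Fvec Finv m J tau $ p) = 0"
    and choice: "(\<Sum>p<m * J. Fvec Finv m J tau $ p) = 0
       \<or> scalar_prod (ones (m * J)) (Sinv fe Finv m J nb (bw 1 \<nu> nb) tau *\<^sub>v Fvec Finv m J tau) = 0"
    and bb: "\<forall>p<m * J. \<bar>beta K mreg sig Finv x (stack m J tau $ p)\<bar> \<le> Bm"
    and av: "avar K sig fX x \<ge> 0"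
    and L: "L \<ge> 0" and nu: "0 < \<nu>" "\<nu> < 1"
    and lnb: "\<forall>i\<in>{1..m}. - 2 * L + s * \<Lambda> < ln (real (nb i)) \<and> ln (real (nb i)) < 2 * L + s * \<Lambda>"
    and mlow: "exp ((1 - s) * \<Lambda> - 2 * L) < real m"
  shows "0 \<le> amse K mreg sig fX fe Finv x m J nb (bw \<alpha> \<nu> nb) tau w"
    and "amse K mreg sig fX fe Finv x m J nb (bw \<alpha> \<nu> nb) tau w
          \<le> (Bm\<^sup>2 * lmax / lmin * \<alpha> ^ 4 * exp (8 * L)) * exp (- 4 * s * \<nu> * \<Lambda>)
            + (avar K sig fX x * lmax * exp (4 * L) / \<alpha>) * exp ((s * \<nu> - 1) * \<Lambda>)"
proof -
  define cl where "cl = exp ((\<nu> - 1) * (2 * L + s * \<Lambda>)) / \<alpha>"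
  define ch where "ch = exp ((\<nu> - 1) * (- 2 * L + s * \<Lambda>)) / \<alpha>"
  define Hm where "Hm = \<alpha>\<^sup>2 * exp (- 2 * \<nu> * (- 2 * L + s * \<Lambda>))"
  have inv: "1 / (real (nb i) * Hb \<alpha> \<nu> nb i) = exp ((\<nu> - 1) * ln (real (nb i))) / \<alpha>"
    if "i \<in> {1..m}" for i
  proof -
    have p: "real (nb i) > 0" using nbp that by simp
    have "real (nb i) * Hb \<alpha> \<nu> nb i = \<alpha> * (exp (ln (real (nb i))) * exp (- \<nu> * ln (real (nb i))))"
      unfolding Hb_def using p by (simp add: powr_def)
    also have "\<dots> = \<alpha> * exp ((1 - \<nu>) * ln (real (nb i)))"
      by (simp add: exp_add[symmetric] algebra_simps)
    finally have "real (nb i) * Hb \<alpha> \<nu> nb i = \<alpha> * exp ((1 - \<nu>) * ln (real (nb i)))" .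
    moreover have "exp ((\<nu> - 1) * ln (real (nb i))) = inverse (exp ((1 - \<nu>) * ln (real (nb i))))"
      by (simp add: exp_minus[symmetric] algebra_simps)
    ultimately show ?thesis using al by (simp add: field_simps)
  qed
  have clb: "\<forall>i<m. cl \<le> 1 / (real (nb (i + 1)) * Hb \<alpha> \<nu> nb (i + 1))"
  proof (intro allI impI)
    fix i assume "i < m"
    then have i: "i + 1 \<in> {1..m}" by simp
    have "(\<nu> - 1) * (2 * L + s * \<Lambda>) \<le> (\<nu> - 1) * ln (real (nb (i + 1)))"
      using lnb[rule_format, OF i] nu by (intro mult_left_mono_neg) auto
    then show "cl \<le> 1 / (real (nb (i + 1)) * Hb \<alpha> \<nu> nb (i + 1))"
      unfolding inv[OF i] cl_def using al by (simp add: divide_right_mono)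
  qed
  have chb: "\<forall>i<m. 1 / (real (nb (i + 1)) * Hb \<alpha> \<nu> nb (i + 1)) \<le> ch"
  proof (intro allI impI)
    fix i assume "i < m"
    then have i: "i + 1 \<in> {1..m}" by simp
    have "(\<nu> - 1) * ln (real (nb (i + 1))) \<le> (\<nu> - 1) * (- 2 * L + s * \<Lambda>)"
      using lnb[rule_format, OF i] nu by (intro mult_left_mono_neg) auto
    then show "1 / (real (nb (i + 1)) * Hb \<alpha> \<nu> nb (i + 1)) \<le> ch"
      unfolding inv[OF i] ch_def using al by (simp add: divide_right_mono)
  qed
  have cl0: "0 < cl" unfolding cl_def using al by simp
  have hb: "\<forall>p<m * J. (stack m J (bw \<alpha> \<nu> nb) $ p)\<^sup>2 \<le> Hm"
  proof (intro allI impI)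
    fix p assume p: "p < m * J"
    have J0: "J > 0" using J by simp
    have i: "p div J + 1 \<in> {1..m}" using p J0 by (simp add: div_less_iff_less_mult Suc_leI)
    define i where "i = p div J + 1"
    have nbi: "real (nb i) > 0" using nbp i unfolding i_def by simp
    have "stack m J (bw \<alpha> \<nu> nb) $ p = \<alpha> * real (nb i) powr (- \<nu>)"
      unfolding stack_def bw_def i_def using p by simp
    then have "(stack m J (bw \<alpha> \<nu> nb) $ p)\<^sup>2 = \<alpha>\<^sup>2 * exp (- 2 * \<nu> * ln (real (nb i)))"
      using nbi by (simp add: powr_def power_mult_distrib power2_eq_square exp_add[symmetric] algebra_simps)
    also have "\<dots> \<le> Hm" unfolding Hm_def
    proof -
      have "- 2 * \<nu> * ln (real (nb i)) \<le> - 2 * \<nu> * (- 2 * L + s * \<Lambda>)"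
        using lnb[rule_format, OF i] nu unfolding i_def by (intro mult_left_mono_neg) auto
      then show "\<alpha>\<^sup>2 * exp (- 2 * \<nu> * ln (real (nb i))) \<le> \<alpha>\<^sup>2 * exp (- 2 * \<nu> * (- 2 * L + s * \<Lambda>))"
        by (intro mult_left_mono) auto
    qed
    finally show "(stack m J (bw \<alpha> \<nu> nb) $ p)\<^sup>2 \<le> Hm" .
  qed
  note ab = amse_bound[OF J m nbp al eig lmin cl0 clb chb w s1 sF choice hb bb av]
  show "0 \<le> amse K mreg sig fX fe Finv x m J nb (bw \<alpha> \<nu> nb) tau w" by (rule ab(1))
  have mJ0: "0 < m * J" using J m by simp
  have Bm0: "Bm \<ge> 0" using bb[rule_format, OF mJ0] by linarith
  have t1: "Hm\<^sup>2 * Bm\<^sup>2 * (lmax * ch / (lmin * cl))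
      \<le> (Bm\<^sup>2 * lmax / lmin * \<alpha> ^ 4 * exp (8 * L)) * exp (- 4 * s * \<nu> * \<Lambda>)"
  proof -
    have e: "Hm\<^sup>2 * (ch / cl) = \<alpha> ^ 4 * exp (- 4 * \<nu> * (- 2 * L + s * \<Lambda>) + (\<nu> - 1) * (- 2 * L + s * \<Lambda>) - (\<nu> - 1) * (2 * L + s * \<Lambda>))"
      unfolding Hm_def ch_def cl_def using al
      by (simp add: power_mult_distrib exp_add[symmetric] exp_diff power2_eq_square field_simps
          numeral_eq_Suc)
    have "- 4 * \<nu> * (- 2 * L + s * \<Lambda>) + (\<nu> - 1) * (- 2 * L + s * \<Lambda>) - (\<nu> - 1) * (2 * L + s * \<Lambda>)
        = 4 * L + 4 * \<nu> * L - 4 * s * \<nu> * \<Lambda>" by (simp add: algebra_simps)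
    also have "\<dots> \<le> 8 * L + (- 4 * s * \<nu> * \<Lambda>)"
    proof -
      have "\<nu> * L \<le> 1 * L" using nu L by (intro mult_right_mono) auto
      then show ?thesis by simp
    qed
    finally have "Hm\<^sup>2 * (ch / cl) \<le> \<alpha> ^ 4 * exp (8 * L + (- 4 * s * \<nu> * \<Lambda>))"
      unfolding e using al by (intro mult_left_mono) auto
    moreover have "exp (8 * L + (- 4 * s * \<nu> * \<Lambda>)) = exp (8 * L) * exp (- 4 * s * \<nu> * \<Lambda>)"
      by (rule exp_add)
    ultimately have "Hm\<^sup>2 * (ch / cl) \<le> \<alpha> ^ 4 * exp (8 * L) * exp (- 4 * s * \<nu> * \<Lambda>)"
      by (simp only: mult.assoc)
    moreover have "Hm\<^sup>2 * Bm\<^sup>2 * (lmax * ch / (lmin * cl)) = (Bm\<^sup>2 * lmax / lmin) * (Hm\<^sup>2 * (ch / cl))"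
      by (simp add: field_simps)
    moreover have "Bm\<^sup>2 * lmax / lmin \<ge> 0" using lmin lmax by simp
    ultimately show ?thesis by (metis (no_types, opaque_lifting) mult.assoc mult_left_mono)
  qed
  have t2: "avar K sig fX x * (lmax * ch / real (m * J)) \<le> (avar K sig fX x * lmax * exp (4 * L) / \<alpha>) * exp ((s * \<nu> - 1) * \<Lambda>)"
  proof -
    have ch0: "ch > 0" unfolding ch_def using al by simp
    have lm0: "lmax > 0" using lmin lmax by simp
    have E0: "exp ((1 - s) * \<Lambda> - 2 * L) > 0" by simp
    have m0: "real m > 0" using m by simp
    have "ch / real (m * J) \<le> ch / real m"
      using ch0 m0 J by (intro divide_left_mono) auto
    also have "\<dots> \<le> ch / exp ((1 - s) * \<Lambda> - 2 * L)"
      using ch0 mlow E0 m0 by (intro divide_left_mono) auto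
    also have "\<dots> = exp ((\<nu> - 1) * (- 2 * L + s * \<Lambda>) - ((1 - s) * \<Lambda> - 2 * L)) / \<alpha>"
      unfolding ch_def by (simp add: exp_diff)
    also have "\<dots> \<le> exp (4 * L + (s * \<nu> - 1) * \<Lambda>) / \<alpha>"
    proof -
      have "\<nu> * L \<ge> 0" using nu L by simp
      then have "(\<nu> - 1) * (- 2 * L + s * \<Lambda>) - ((1 - s) * \<Lambda> - 2 * L) \<le> 4 * L + (s * \<nu> - 1) * \<Lambda>"
        by (simp add: algebra_simps)
      then show ?thesis using al by (intro divide_right_mono) auto
    qed
    also have "\<dots> = exp (4 * L) / \<alpha> * exp ((s * \<nu> - 1) * \<Lambda>)" by (simp add: exp_add)
    finally have c: "ch / real (m * J) \<le> exp (4 * L) / \<alpha> * exp ((s * \<nu> - 1) * \<Lambda>)" .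
    have "avar K sig fX x * (lmax * ch / real (m * J)) = (avar K sig fX x * lmax) * (ch / real (m * J))" by simp
    also have "\<dots> \<le> (avar K sig fX x * lmax) * (exp (4 * L) / \<alpha> * exp ((s * \<nu> - 1) * \<Lambda>))"
      using c av lm0 by (intro mult_left_mono) auto
    finally show ?thesis by simp
  qed
  show "amse K mreg sig fX fe Finv x m J nb (bw \<alpha> \<nu> nb) tau w
          \<le> (Bm\<^sup>2 * lmax / lmin * \<alpha> ^ 4 * exp (8 * L)) * exp (- 4 * s * \<nu> * \<Lambda>)
            + (avar K sig fX x * lmax * exp (4 * L) / \<alpha>) * exp ((s * \<nu> - 1) * \<Lambda>)"
    using ab(2) t1 t2 by linarith
qed

theorem corollary2:
  fixes mreg sig fX K fe Fe :: "real \<Rightarrow> real" and Ix :: "real set"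
    and mb :: "nat \<Rightarrow> nat" and nb :: "nat \<Rightarrow> nat \<Rightarrow> nat" and J :: nat
    and dtau delta_tau alpha s Mb Mw lmin lmax deltaK sK :: real
    and nu tbar :: "nat \<Rightarrow> real"
  defines "n \<equiv> \<lambda>k. \<Sum>i = 1..mb k. nb k i"
    and "Finv \<equiv> qinv Fe"
    and "tau \<equiv> \<lambda>k. tau_lev (mb k) J dtau (tbar k)"
    and "h \<equiv> \<lambda>k. bw alpha (nu k) (nb k)"
    and "w \<equiv> \<lambda>k. opt_weights fe (qinv Fe) (mb k) J (nb k) (bw alpha (nu k) (nb k))
                      (tau_lev (mb k) J dtau (tbar k))"
  assumes
    \<comment> \<open>(A1) and the model ingredients\<close>
    A1_open: "open Ix" and A1_sub: "Ix \<subseteq> {0..1}"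
    and A1_pos: "\<forall>y\<in>Ix. fX y > 0 \<and> sig y > 0"
    and A1_fX: "C2_on Ix fX" and A1_m: "C2_on Ix mreg" and A1_sig: "C2_on Ix sig"
    and fX_dens: "\<forall>y. fX y \<ge> 0" "\<forall>y. y \<notin> {0..1} \<longrightarrow> fX y = 0"
      "integrable lborel fX" "(LINT y|lborel. fX y) = 1"
    and A1_fe_pos: "\<forall>t. fe t > 0"
    and A1_fe_deriv: "\<forall>t. fe differentiable (at t)"
      "continuous_on UNIV (deriv fe)" "bounded (range (deriv fe))"
    and eps_cdf: "\<forall>t. Fe t = (LINT u:{..t}|lborel. fe u)"
    and eps_dens: "integrable lborel fe" "(LINT u|lborel. fe u) = 1"
    and eps_mom: "integrable lborel (\<lambda>u. u\<^sup>2 * fe u)"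
      "(LINT u|lborel. u * fe u) = 0" "(LINT u|lborel. u\<^sup>2 * fe u) = 1"
    \<comment> \<open>(A2)\<close>
    and A2_lip: "\<exists>L. \<forall>u v. \<bar>K u - K v\<bar> \<le> L * \<bar>u - v\<bar>"
    and A2_nonneg: "\<forall>u. K u \<ge> 0"
    and A2_supp: "\<exists>R. \<forall>u. R < \<bar>u\<bar> \<longrightarrow> K u = 0"
    and A2_int: "integrable lborel K" "(LINT u|lborel. K u) = 1"
      "(LINT u|lborel. u * K u) = 0"
      "integrable lborel (\<lambda>u. u\<^sup>2 * K u)" "integrable lborel (\<lambda>u. (K u)\<^sup>2)"
    and A2_low: "deltaK > 0" "sK > 0" "\<forall>u\<in>{-sK..sK}. K u \<ge> deltaK"
    \<comment> \<open>design\<close>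
    and J_pos: "J \<ge> 1" and mb_pos: "\<forall>k. mb k \<ge> 1"
    and n_lim: "filterlim (\<lambda>k. real (n k)) at_top sequentially"
    and alpha_pos: "alpha > 0" and dtau_pos: "dtau > 0"
    and tbar_range: "\<forall>k. delta_tau \<le> tbar k - dtau / 2 \<and> tbar k + dtau / 2 \<le> 1 - delta_tau"
    and tbar_choice:
      "(\<forall>k. (\<Sum>p < mb k * J. Fvec Finv (mb k) J (tau k) $ p) = 0)
       \<or> (\<forall>k. scalar_prod (ones (mb k * J))
                (Sinv fe Finv (mb k) J (nb k) (bw 1 (nu k) (nb k)) (tau k)
                  *\<^sub>v Fvec Finv (mb k) J (tau k)) = 0)"
    \<comment> \<open>(A3)\<close>
    and A3_consts: "Mw > 0" "0 < delta_tau" "delta_tau < 1/2" "0 < lmin" "lmin < lmax"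
    and A3_sum1: "\<forall>k. (\<Sum>p < mb k * J. w k $ p) = 1"
    and A3_sumF: "\<forall>k. (\<Sum>p < mb k * J. w k $ p * Fvec Finv (mb k) J (tau k) $ p) = 0"
    and A3_wbd: "\<forall>k p. p < mb k * J \<longrightarrow> \<bar>w k $ p\<bar> < Mw"
    and A3_tau: "\<forall>k i j. i \<in> {1..mb k} \<longrightarrow> j \<in> {1..J} \<longrightarrow>
                   delta_tau < tau k i j \<and> tau k i j < 1 - delta_tau"
    and A3_eig: "\<forall>k i e. i \<in> {1..mb k} \<longrightarrow> eigenvalue (R1mat fe Finv J (tau k) i) e \<longrightarrow>
                   lmin < e \<and> e < lmax"
    \<comment> \<open>(A4)\<close>
    and A4_consts: "Mb > 0" "2/3 < s" "s \<le> 1"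
    and A4_sizes: "\<forall>k i. i \<in> {1..mb k} \<longrightarrow>
                     Mb powr (-2) * real (n k) powr s < real (nb k i)
                     \<and> real (nb k i) < Mb\<^sup>2 * real (n k) powr s"
    and A4_nu: "\<forall>k. 0 < nu k \<and> nu k < 3 - 2 / s"
  shows
    "(\<forall>nu0. (\<forall>k. nu k = nu0) \<longrightarrow>
        (\<forall>x\<in>{0..1}.
           (11/15 \<le> s \<longrightarrow>
              (\<lambda>k. amse K mreg sig fX fe Finv x (mb k) J (nb k) (h k) (tau k) (w k))
                \<in> O(\<lambda>k. real (n k) powr (-4 * s * nu0) + real (n k) powr (s * nu0 - 1)))
         \<and> (s \<le> 11/15 \<longrightarrow>
              (\<lambda>k. amse K mreg sig fX fe Finv x (mb k) J (nb k) (h k) (tau k) (w k))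
                \<in> O(\<lambda>k. real (n k) powr (-4 * s * nu0)))))
     \<and> ((11/15 \<le> s \<and> (\<forall>k. nu k = ln (real (n k)) / (5 * (ln (real (n k)) - ln (real (mb k)))))) \<longrightarrow>
        (\<forall>x\<in>{0..1}.
           (\<lambda>k. amse K mreg sig fX fe Finv x (mb k) J (nb k) (h k) (tau k) (w k))
             \<in> O(\<lambda>k. real (n k) powr (-4/5))))"
proof -
  have Finv_eq: "Finv = qinv Fe" by (simp add: Finv_def)
  have contfe: "continuous_on UNIV fe"
    using A1_fe_deriv(1) by (simp add: continuous_at_imp_continuous_on differentiable_imp_continuous_within)
  obtain CF where CF: "\<forall>\<tau>. delta_tau < \<tau> \<and> \<tau> < 1 - delta_tau \<longrightarrow> \<bar>qinv Fe \<tau>\<bar> \<le> CF"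
    using Finv_bound[OF eps_cdf eps_dens(1) eps_dens(2) A1_fe_pos contfe eps_mom(1) eps_mom(3) A3_consts(2)]
    by blast
  have nsum: "real (n k) = (\<Sum>i=1..mb k. real (nb k i))" for k
    unfolding n_def by simp
  have one_in: "1 \<in> {1..mb k}" for k using mb_pos by simp
  have npos: "real (n k) > 0" for k
  proof (rule ccontr)
    assume "\<not> real (n k) > 0"
    then have "real (n k) = 0" by simp
    then show False using A4_sizes[rule_format, OF one_in[of k]] by simp
  qed
  have X0: "real (n k) powr s > 0" for k using npos[of k] by simp
  have Mb1: "Mb > 1"
  proof (rule ccontr)
    assume "\<not> Mb > 1"
    then have le: "Mb \<le> 1" by simp
    have "Mb powr (-2) * real (n 0) powr s < Mb\<^sup>2 * real (n 0) powr s"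
      using A4_sizes[rule_format, OF one_in[of 0]] by linarith
    then have lt: "Mb powr (-2) < Mb\<^sup>2" using X0[of 0] by simp
    have "Mb powr (-2) = inverse (Mb\<^sup>2)" using A4_consts(1) by (simp add: powr_minus powr_numeral)
    moreover have "Mb\<^sup>2 \<le> 1" using le A4_consts(1) by (simp add: power_le_one)
    moreover have "Mb\<^sup>2 > 0" using A4_consts(1) by simp
    ultimately have "Mb\<^sup>2 \<le> Mb powr (-2)" by (simp add: one_le_inverse order_trans)
    then show False using lt by simp
  qed
  define L where "L = ln Mb"
  have L0: "L > 0" unfolding L_def using Mb1 by simp
  define \<Lambda> where "\<Lambda> = (\<lambda>k. ln (real (n k)))"
  have lnlo: "ln (Mb powr (-2) * real (n k) powr s) = - 2 * L + s * \<Lambda> k" for k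
    using A4_consts(1) npos[of k] unfolding L_def \<Lambda>_def by (simp add: ln_mult ln_powr)
  have lnhi: "ln (Mb\<^sup>2 * real (n k) powr s) = 2 * L + s * \<Lambda> k" for k
    using A4_consts(1) npos[of k] unfolding L_def \<Lambda>_def by (simp add: ln_mult ln_powr ln_realpow)
  have nbpos: "\<forall>i\<in>{1..mb k}. nb k i > 0" for k
  proof
    fix i assume i: "i \<in> {1..mb k}"
    have "0 < Mb powr (-2) * real (n k) powr s" using A4_consts(1) X0[of k] by simp
    then show "nb k i > 0" using A4_sizes[rule_format, OF i] by linarith
  qed
  have lnb: "\<forall>i\<in>{1..mb k}. - 2 * L + s * \<Lambda> k < ln (real (nb k i)) \<and> ln (real (nb k i)) < 2 * L + s * \<Lambda> k" for k
  proof
    fix i assume i: "i \<in> {1..mb k}"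
    have p1: "0 < Mb powr (-2) * real (n k) powr s" using A4_consts(1) X0[of k] by simp
    have p2: "0 < real (nb k i)" using nbpos[of k] i by simp
    show "- 2 * L + s * \<Lambda> k < ln (real (nb k i)) \<and> ln (real (nb k i)) < 2 * L + s * \<Lambda> k"
      unfolding lnlo[symmetric] lnhi[symmetric]
      using A4_sizes[rule_format, OF i] p1 p2 by simp
  qed
  have mbounds: "real (mb k) * (Mb powr (-2) * real (n k) powr s) < real (n k)
      \<and> real (n k) < real (mb k) * (Mb\<^sup>2 * real (n k) powr s)" for k
  proof -
    have ne: "{1..mb k} \<noteq> {}" using one_in[of k] by blast
    have "(\<Sum>i=1..mb k. Mb powr (-2) * real (n k) powr s) < (\<Sum>i=1..mb k. real (nb k i))"
      by (rule sum_strict_mono) (use ne A4_sizes in auto)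
    moreover have "(\<Sum>i=1..mb k. real (nb k i)) < (\<Sum>i=1..mb k. Mb\<^sup>2 * real (n k) powr s)"
      by (rule sum_strict_mono) (use ne A4_sizes in auto)
    ultimately show ?thesis unfolding nsum[symmetric] by simp
  qed
  have lnm: "(1 - s) * \<Lambda> k - 2 * L < ln (real (mb k)) \<and> ln (real (mb k)) < (1 - s) * \<Lambda> k + 2 * L" for k
  proof -
    have m0: "real (mb k) > 0" using mb_pos[rule_format, of k] by simp
    have p1: "0 < Mb powr (-2) * real (n k) powr s" using A4_consts(1) X0[of k] by simp
    have p2: "0 < Mb\<^sup>2 * real (n k) powr s" using A4_consts(1) X0[of k] by simp
    have "ln (real (mb k) * (Mb powr (-2) * real (n k) powr s)) < ln (real (n k))"
      using mbounds[of k] m0 p1 npos[of k] by simp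
    moreover have "ln (real (mb k) * (Mb powr (-2) * real (n k) powr s)) = ln (real (mb k)) + (- 2 * L + s * \<Lambda> k)"
      by (simp only: ln_mult_pos[OF m0 p1] lnlo)
    ultimately have a: "ln (real (mb k)) + (- 2 * L + s * \<Lambda> k) < \<Lambda> k" unfolding \<Lambda>_def by simp
    have "ln (real (n k)) < ln (real (mb k) * (Mb\<^sup>2 * real (n k) powr s))"
      using mbounds[of k] m0 p2 npos[of k] by simp
    moreover have "ln (real (mb k) * (Mb\<^sup>2 * real (n k) powr s)) = ln (real (mb k)) + (2 * L + s * \<Lambda> k)"
      by (simp only: ln_mult_pos[OF m0 p2] lnhi)
    ultimately have b: "\<Lambda> k < ln (real (mb k)) + (2 * L + s * \<Lambda> k)" unfolding \<Lambda>_def by simp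
    show ?thesis using a b by (simp add: algebra_simps)
  qed
  have mlow: "exp ((1 - s) * \<Lambda> k - 2 * L) < real (mb k)" for k
  proof -
    have m0: "real (mb k) > 0" using mb_pos[rule_format, of k] by simp
    have "exp ((1 - s) * \<Lambda> k - 2 * L) < exp (ln (real (mb k)))" using lnm[of k] by simp
    then show ?thesis using m0 by simp
  qed
  have nu01: "0 < nu k \<and> nu k < 1" for k
  proof -
    have "2 / s \<ge> 2" using A4_consts by (simp add: le_divide_eq)
    then show ?thesis using A4_nu[rule_format, of k] by linarith
  qed
  have lmaxp: "lmin < lmax" using A3_consts by simp
  define Bm where "Bm = (\<lambda>x. \<bar>mu2 K\<bar> / 2 * (\<bar>deriv (deriv mreg) x\<bar> + \<bar>deriv (deriv sig) x\<bar> * CF))"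
  define K1 where "K1 = (\<lambda>x. (Bm x)\<^sup>2 * lmax / lmin * alpha ^ 4 * exp (8 * L))"
  define K2 where "K2 = (\<lambda>x. avar K sig fX x * lmax * exp (4 * L) / alpha)"
  have perk: "0 \<le> amse K mreg sig fX fe Finv x (mb k) J (nb k) (h k) (tau k) (w k)
     \<and> amse K mreg sig fX fe Finv x (mb k) J (nb k) (h k) (tau k) (w k)
       \<le> K1 x * exp (- 4 * s * nu k * \<Lambda> k) + K2 x * exp ((s * nu k - 1) * \<Lambda> k)" for x k
  proof -
    have wk: "w k = opt_weights fe Finv (mb k) J (nb k) (bw alpha (nu k) (nb k)) (tau k)"
      unfolding w_def Finv_def tau_def by simp
    have hk: "h k = bw alpha (nu k) (nb k)" unfolding h_def by simp
    have eig: "\<forall>i e. i \<in> {1..mb k} \<longrightarrow> eigenvalue (R1mat fe Finv J (tau k) i) e \<longrightarrow> lmin < e \<and> e < lmax"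
      using A3_eig by blast
    have s1: "(\<Sum>p<mb k * J. w k $ p) = 1" using A3_sum1 by blast
    have sF: "(\<Sum>p<mb k * J. w k $ p * Fvec Finv (mb k) J (tau k) $ p) = 0" using A3_sumF by blast
    have choice: "(\<Sum>p<mb k * J. Fvec Finv (mb k) J (tau k) $ p) = 0
       \<or> scalar_prod (ones (mb k * J)) (Sinv fe Finv (mb k) J (nb k) (bw 1 (nu k) (nb k)) (tau k) *\<^sub>v Fvec Finv (mb k) J (tau k)) = 0"
      using tbar_choice by blast
    have bb: "\<forall>p<mb k * J. \<bar>beta K mreg sig Finv x (stack (mb k) J (tau k) $ p)\<bar> \<le> Bm x"
    proof (intro allI impI)
      fix p assume p: "p < mb k * J"
      have J0: "J > 0" using J_pos by simp
      have i: "p div J + 1 \<in> {1..mb k}" using p J0 by (simp add: div_less_iff_less_mult Suc_leI)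
      have j: "p mod J + 1 \<in> {1..J}" using J0 by (simp add: Suc_leI)
      have st: "stack (mb k) J (tau k) $ p = tau k (p div J + 1) (p mod J + 1)"
        unfolding stack_def using p by simp
      have tr: "delta_tau < tau k (p div J + 1) (p mod J + 1) \<and> tau k (p div J + 1) (p mod J + 1) < 1 - delta_tau"
        using A3_tau i j by blast
      have Fb: "\<bar>Finv (stack (mb k) J (tau k) $ p)\<bar> \<le> CF" unfolding st Finv_eq using CF tr by blast
      have "\<bar>beta K mreg sig Finv x (stack (mb k) J (tau k) $ p)\<bar>
          = \<bar>mu2 K\<bar> / 2 * \<bar>deriv (deriv mreg) x + deriv (deriv sig) x * Finv (stack (mb k) J (tau k) $ p)\<bar>"
        unfolding beta_def by (simp add: abs_mult)
      also have "\<dots> \<le> Bm x" unfolding Bm_def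
      proof (intro mult_left_mono)
        have "\<bar>deriv (deriv sig) x * Finv (stack (mb k) J (tau k) $ p)\<bar> \<le> \<bar>deriv (deriv sig) x\<bar> * CF"
          unfolding abs_mult using Fb by (intro mult_left_mono) auto
        then show "\<bar>deriv (deriv mreg) x + deriv (deriv sig) x * Finv (stack (mb k) J (tau k) $ p)\<bar>
            \<le> \<bar>deriv (deriv mreg) x\<bar> + \<bar>deriv (deriv sig) x\<bar> * CF"
          by (meson abs_triangle_ineq add_left_mono order_trans)
      qed simp
      finally show "\<bar>beta K mreg sig Finv x (stack (mb k) J (tau k) $ p)\<bar> \<le> Bm x" .
    qed
    have av: "avar K sig fX x \<ge> 0"
    proof -
      have "0 \<le> (LINT v|lborel. (K v)\<^sup>2)" by (rule Bochner_Integration.integral_nonneg) simp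
      then show ?thesis unfolding avar_def using fX_dens(1) by simp
    qed
    have nuk: "0 < nu k" "nu k < 1" using nu01[of k] by auto
    have mk: "mb k \<ge> 1" using mb_pos by blast
    note fb = final_bound[OF J_pos mk nbpos[of k] alpha_pos eig A3_consts(4) lmaxp wk s1 sF choice bb av
        less_imp_le[OF L0] nuk lnb[of k] mlow[of k]]
    show ?thesis using fb unfolding hk K1_def K2_def by simp
  qed
  have pw: "exp (a * \<Lambda> k) = real (n k) powr a" for a k
    using npos[of k] unfolding \<Lambda>_def by (simp add: powr_def)
  have n1: "real (n k) \<ge> 1" for k using npos[of k] by simp
  have K10: "K1 x \<ge> 0" for x unfolding K1_def using A3_consts alpha_pos by simp
  have K20: "K2 x \<ge> 0" for x
  proof -
    have "0 \<le> (LINT v|lborel. (K v)\<^sup>2)" by (rule Bochner_Integration.integral_nonneg) simp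
    then have "avar K sig fX x \<ge> 0" unfolding avar_def using fX_dens(1) by simp
    then show ?thesis unfolding K2_def using A3_consts alpha_pos by simp
  qed
  have part1: "\<forall>nu0. (\<forall>k. nu k = nu0) \<longrightarrow>
        (\<forall>x\<in>{0..1}.
           (11/15 \<le> s \<longrightarrow>
              (\<lambda>k. amse K mreg sig fX fe Finv x (mb k) J (nb k) (h k) (tau k) (w k))
                \<in> O(\<lambda>k. real (n k) powr (-4 * s * nu0) + real (n k) powr (s * nu0 - 1)))
         \<and> (s \<le> 11/15 \<longrightarrow>
              (\<lambda>k. amse K mreg sig fX fe Finv x (mb k) J (nb k) (h k) (tau k) (w k))
                \<in> O(\<lambda>k. real (n k) powr (-4 * s * nu0))))"
  proof (intro allI impI ballI conjI)
    fix nu0 x assume nuc: "\<forall>k. nu k = nu0"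
    have bd: "0 \<le> amse K mreg sig fX fe Finv x (mb k) J (nb k) (h k) (tau k) (w k)
       \<and> amse K mreg sig fX fe Finv x (mb k) J (nb k) (h k) (tau k) (w k)
         \<le> K1 x * real (n k) powr (-4 * s * nu0) + K2 x * real (n k) powr (s * nu0 - 1)" for k
      using perk[of x k] nuc pw[of "- 4 * s * nu0" k] pw[of "s * nu0 - 1" k] by (simp add: mult.assoc)
    show "(\<lambda>k. amse K mreg sig fX fe Finv x (mb k) J (nb k) (h k) (tau k) (w k))
                \<in> O(\<lambda>k. real (n k) powr (-4 * s * nu0) + real (n k) powr (s * nu0 - 1))"
    proof (rule bigoI[where c="K1 x + K2 x"], rule always_eventually, rule allI)
      fix k
      let ?a = "real (n k) powr (-4 * s * nu0)" and ?b = "real (n k) powr (s * nu0 - 1)"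
      have a0: "?a \<ge> 0" and b0: "?b \<ge> 0" by simp_all
      have "K1 x * ?a + K2 x * ?b \<le> (K1 x + K2 x) * (?a + ?b)"
        using a0 b0 K10[of x] K20[of x] by (simp add: algebra_simps)
      then show "norm (amse K mreg sig fX fe Finv x (mb k) J (nb k) (h k) (tau k) (w k))
          \<le> (K1 x + K2 x) * norm (?a + ?b)"
        using bd[of k] a0 b0 by simp
    qed
    assume s1115: "s \<le> 11/15"
    have nu_le: "s * nu0 - 1 \<le> -4 * s * nu0"
    proof -
      have "nu0 < 3 - 2 / s" using A4_nu nuc by metis
      then have "s * nu0 \<le> s * (3 - 2 / s)" using A4_consts by (intro mult_left_mono) auto
      also have "\<dots> = 3 * s - 2" using A4_consts by (simp add: field_simps)
      finally show ?thesis using s1115 by linarith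
    qed
    show "(\<lambda>k. amse K mreg sig fX fe Finv x (mb k) J (nb k) (h k) (tau k) (w k))
                \<in> O(\<lambda>k. real (n k) powr (-4 * s * nu0))"
    proof (rule bigoI[where c="K1 x + K2 x"], rule always_eventually, rule allI)
      fix k
      let ?a = "real (n k) powr (-4 * s * nu0)" and ?b = "real (n k) powr (s * nu0 - 1)"
      have a0: "?a \<ge> 0" and b0: "?b \<ge> 0" by simp_all
      have ba: "?b \<le> ?a" using nu_le n1[of k] by (rule powr_mono)
      have "K1 x * ?a + K2 x * ?b \<le> (K1 x + K2 x) * ?a"
        using ba K20[of x] by (simp add: algebra_simps mult_left_mono)
      then show "norm (amse K mreg sig fX fe Finv x (mb k) J (nb k) (h k) (tau k) (w k))
          \<le> (K1 x + K2 x) * norm ?a"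
        using bd[of k] a0 by simp
    qed
  qed
  have part2: "((11/15 \<le> s \<and> (\<forall>k. nu k = ln (real (n k)) / (5 * (ln (real (n k)) - ln (real (mb k)))))) \<longrightarrow>
        (\<forall>x\<in>{0..1}.
           (\<lambda>k. amse K mreg sig fX fe Finv x (mb k) J (nb k) (h k) (tau k) (w k))
             \<in> O(\<lambda>k. real (n k) powr (-4/5))))"
  proof (intro impI ballI)
    fix x assume hyp: "11/15 \<le> s \<and> (\<forall>k. nu k = ln (real (n k)) / (5 * (ln (real (n k)) - ln (real (mb k)))))"
    have ex1: "- 4 * s * nu k * \<Lambda> k \<le> 8 * L + (- 4 / 5) * \<Lambda> k"
      and ex2: "(s * nu k - 1) * \<Lambda> k \<le> 2 * L + (- 4 / 5) * \<Lambda> k" for k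
    proof -
      define D where "D = \<Lambda> k - ln (real (mb k))"
      have nuk: "nu k = \<Lambda> k / (5 * D)" using hyp unfolding D_def \<Lambda>_def by blast
      have D0: "D \<noteq> 0" using nuk nu01[of k] by auto
      have Leq: "\<Lambda> k = 5 * nu k * D" using nuk D0 by (simp add: field_simps)
      have Db: "s * \<Lambda> k - 2 * L < D \<and> D < s * \<Lambda> k + 2 * L"
        using lnm[of k] unfolding D_def by (simp add: algebra_simps)
      have n0: "0 < nu k" "nu k < 1" using nu01[of k] by auto
      have p1: "nu k * (D - s * \<Lambda> k) \<le> nu k * (2 * L)"
        using Db n0 by (intro mult_left_mono) auto
      have p2: "nu k * (s * \<Lambda> k - D) \<le> nu k * (2 * L)"
        using Db n0 by (intro mult_left_mono) auto
      have p3: "nu k * (2 * L) \<le> 2 * L" using n0 L0 by (simp add: mult_le_cancel_right1)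
      define A where "A = s * nu k * \<Lambda> k"
      define B where "B = nu k * D"
      have f1: "B = \<Lambda> k / 5" using Leq unfolding B_def by simp
      have g1: "- 4 * s * nu k * \<Lambda> k = - 4 * A" unfolding A_def by simp
      have g2: "nu k * (D - s * \<Lambda> k) = B - A" unfolding A_def B_def by (simp add: algebra_simps)
      have g3: "nu k * (s * \<Lambda> k - D) = A - B" unfolding A_def B_def by (simp add: algebra_simps)
      have g4: "(s * nu k - 1) * \<Lambda> k = A - \<Lambda> k" unfolding A_def by (simp add: algebra_simps)
      have h1: "B - A \<le> 2 * L" using p1 p3 g2 by linarith
      have h2: "A - B \<le> 2 * L" using p2 p3 g3 by linarith
      show "- 4 * s * nu k * \<Lambda> k \<le> 8 * L + (- 4 / 5) * \<Lambda> k" unfolding g1 using h1 f1 by linarith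
      show "(s * nu k - 1) * \<Lambda> k \<le> 2 * L + (- 4 / 5) * \<Lambda> k" unfolding g4 using h2 f1 by linarith
    qed
    show "(\<lambda>k. amse K mreg sig fX fe Finv x (mb k) J (nb k) (h k) (tau k) (w k))
             \<in> O(\<lambda>k. real (n k) powr (-4/5))"
    proof (rule bigoI[where c="K1 x * exp (8 * L) + K2 x * exp (2 * L)"], rule always_eventually, rule allI)
      fix k
      have "exp (- 4 * s * nu k * \<Lambda> k) \<le> exp (8 * L + (- 4 / 5) * \<Lambda> k)" using ex1[of k] by simp
      also have "\<dots> = exp (8 * L) * real (n k) powr (-4/5)" by (simp only: exp_add pw)
      finally have q1: "exp (- 4 * s * nu k * \<Lambda> k) \<le> exp (8 * L) * real (n k) powr (-4/5)" .
      have "exp ((s * nu k - 1) * \<Lambda> k) \<le> exp (2 * L + (- 4 / 5) * \<Lambda> k)" using ex2[of k] by simp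
      also have "\<dots> = exp (2 * L) * real (n k) powr (-4/5)" by (simp only: exp_add pw)
      finally have q2: "exp ((s * nu k - 1) * \<Lambda> k) \<le> exp (2 * L) * real (n k) powr (-4/5)" .
      have "K1 x * exp (- 4 * s * nu k * \<Lambda> k) + K2 x * exp ((s * nu k - 1) * \<Lambda> k)
          \<le> K1 x * (exp (8 * L) * real (n k) powr (-4/5)) + K2 x * (exp (2 * L) * real (n k) powr (-4/5))"
        using q1 q2 K10[of x] K20[of x] by (intro add_mono mult_left_mono) auto
      also have "\<dots> = (K1 x * exp (8 * L) + K2 x * exp (2 * L)) * norm (real (n k) powr (-4/5))"
        by (simp add: algebra_simps)
      finally show "norm (amse K mreg sig fX fe Finv x (mb k) J (nb k) (h k) (tau k) (w k))
          \<le> (K1 x * exp (8 * L) + K2 x * exp (2 * L)) * norm (real (n k) powr (-4/5))"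
        using perk[of x k] by simp
    qed
  qed
  show ?thesis by (rule conjI[OF part1 part2])
qed

end
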